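(* For every integer $n\geq 0$, the elements $A^iB^jC^k\alpha^r\beta^s\gamma^t$ with $i,j,k,r,s,t\geq 0$ and $i+j+k+r+s+t\leq n$ form a basis for the $\mathbb F$-vector space $\Delta_n$.
   Context: Let $\mathbb F$ be a field and fix a nonzero $q\in\mathbb F$ with $q^4\neq 1$. The universal Askey--Wilson algebra $\Delta$ is the associative $\mathbb F$-algebra with 1 with generators $A,B,C$ subject to the relations that each of $A+\frac{qBC-q^{-1}CB}{q^2-q^{-2}}$, $B+\frac{qCA-q^{-1}AC}{q^2-q^{-2}}$, $C+\frac{qAB-q^{-1}BA}{q^2-q^{-2}}$ is central; $\alpha,\beta,\gamma$ denote these three central elements (in order) each multiplied by $q+q^{-1}$. For subspaces $H,K$ let $HK$ be the span of all $hk$, $h\in H$, $k\in K$. Define subspaces $\Delta_0=\mathbb F1$, $\Delta_1=\Delta_0+{\rm Span}\{A,B,C,\alpha,\beta,\gamma\}$, and $\Delta_n=\Delta_1\Delta_{n-1}$ for $n\geq 1$. *)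

theory Defs
  imports Main
begin

text \<open>The free associative algebra over a field 'k on the letters A, B, C,
  realised as functions from words to coefficients, with concatenation
  (convolution) product.\<close>

datatype gen = GA | GB | GC

type_synonym 'k fa = "gen list \<Rightarrow> 'k"

definition fa_poly :: "('k::field) fa set" where
  "fa_poly = {f. finite {w. f w \<noteq> 0}}"

definition fa_one :: "('k::field) fa" where
  "fa_one = (\<lambda>w. if w = [] then 1 else 0)"

definition fa_gen :: "gen \<Rightarrow> ('k::field) fa" where
  "fa_gen x = (\<lambda>w. if w = [x] then 1 else 0)"

definition fa_add :: "('k::field) fa \<Rightarrow> 'k fa \<Rightarrow> 'k fa" where
  "fa_add f g = (\<lambda>w. f w + g w)"

definition fa_diff :: "('k::field) fa \<Rightarrow> 'k fa \<Rightarrow> 'k fa" where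
  "fa_diff f g = (\<lambda>w. f w - g w)"

definition fa_smul :: "'k::field \<Rightarrow> 'k fa \<Rightarrow> 'k fa" where
  "fa_smul c f = (\<lambda>w. c * f w)"

definition fa_mul :: "('k::field) fa \<Rightarrow> 'k fa \<Rightarrow> 'k fa" where
  "fa_mul f g = (\<lambda>w. \<Sum>i\<le>length w. f (take i w) * g (drop i w))"

primrec fa_pow :: "('k::field) fa \<Rightarrow> nat \<Rightarrow> 'k fa" where
  "fa_pow f 0 = fa_one"
| "fa_pow f (Suc n) = fa_mul f (fa_pow f n)"

definition fa_span :: "('k::field) fa set \<Rightarrow> 'k fa set" where
  "fa_span S = {f. \<exists>T c. finite T \<and> T \<subseteq> S \<and> f = (\<lambda>w. \<Sum>s\<in>T. c s * s w)}"

abbreviation "AWA \<equiv> fa_gen GA"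
abbreviation "AWB \<equiv> fa_gen GB"
abbreviation "AWC \<equiv> fa_gen GC"

definition aw_central :: "'k::field \<Rightarrow> 'k fa \<Rightarrow> 'k fa \<Rightarrow> 'k fa \<Rightarrow> 'k fa" where
  "aw_central q X Y Z = fa_smul (q + inverse q)
     (fa_add X (fa_smul (inverse (q^2 - inverse q ^ 2))
        (fa_diff (fa_smul q (fa_mul Y Z)) (fa_smul (inverse q) (fa_mul Z Y)))))"

definition aw_alpha :: "'k::field \<Rightarrow> 'k fa" where
  "aw_alpha q = aw_central q AWA AWB AWC"
definition aw_beta :: "'k::field \<Rightarrow> 'k fa" where
  "aw_beta q = aw_central q AWB AWC AWA"
definition aw_gamma :: "'k::field \<Rightarrow> 'k fa" where
  "aw_gamma q = aw_central q AWC AWA AWB"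

definition aw_rels :: "'k::field \<Rightarrow> 'k fa set" where
  "aw_rels q = {fa_diff (fa_mul x z) (fa_mul z x) | x z.
      x \<in> {AWA, AWB, AWC} \<and> z \<in> {aw_alpha q, aw_beta q, aw_gamma q}}"

text \<open>The two-sided ideal generated by the relations; Delta = free algebra / ideal.\<close>
definition aw_ideal :: "'k::field \<Rightarrow> 'k fa set" where
  "aw_ideal q = fa_span {fa_mul (fa_mul a r) b | a r b.
      a \<in> fa_poly \<and> b \<in> fa_poly \<and> r \<in> aw_rels q}"

text \<open>Lifts of the filtration: Delta_0 = F1, Delta_1 = Delta_0 + span{A,B,C,alpha,beta,gamma},
  Delta_n = Delta_1 Delta_(n-1). The subspace Delta_n of Delta is the image of aw_D q n.\<close>
definition aw_D1 :: "'k::field \<Rightarrow> 'k fa set" where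
  "aw_D1 q = fa_span {fa_one, AWA, AWB, AWC, aw_alpha q, aw_beta q, aw_gamma q}"

primrec aw_D :: "'k::field \<Rightarrow> nat \<Rightarrow> 'k fa set" where
  "aw_D q 0 = fa_span {fa_one}"
| "aw_D q (Suc n) = fa_span {fa_mul h k | h k. h \<in> aw_D1 q \<and> k \<in> aw_D q n}"

definition aw_mono :: "'k::field \<Rightarrow> nat \<times> nat \<times> nat \<times> nat \<times> nat \<times> nat \<Rightarrow> 'k fa" where
  "aw_mono q = (\<lambda>(i, j, k, r, s, t).
     fa_mul (fa_pow AWA i) (fa_mul (fa_pow AWB j) (fa_mul (fa_pow AWC k)
       (fa_mul (fa_pow (aw_alpha q) r) (fa_mul (fa_pow (aw_beta q) s) (fa_pow (aw_gamma q) t))))))"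

definition idx_le :: "nat \<Rightarrow> (nat \<times> nat \<times> nat \<times> nat \<times> nat \<times> nat) set" where
  "idx_le n = {(i, j, k, r, s, t). i + j + k + r + s + t \<le> n}"

end

theory Submission
  imports Defs
begin

definition splits :: "gen list \<Rightarrow> (gen list \<times> gen list) set" where
  "splits w = {(u,v). u @ v = w}"

lemma splits_img: "splits w = (\<lambda>i. (take i w, drop i w)) ` {..length w}"
proof (rule set_eqI, rule iffI)
  fix p assume "p \<in> splits w"
  then obtain a b where p: "p = (a,b)" "w = a @ b" unfolding splits_def by auto
  then show "p \<in> (\<lambda>i. (take i w, drop i w)) ` {..length w}"
    by (intro image_eqI[of _ _ "length a"]) auto
qed (auto simp: splits_def)

lemma finite_splits[simp]: "finite (splits w)"
  by (simp add: splits_img)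

lemma fa_mul_splits: "fa_mul f g w = (\<Sum>(u,v)\<in>splits w. f u * g v)"
proof -
  have "bij_betw (\<lambda>i. (take i w, drop i w)) {..length w} (splits w)"
    unfolding bij_betw_def splits_img
  proof
    show "inj_on (\<lambda>i. (take i w, drop i w)) {..length w}"
      by (rule inj_onI) (metis atMost_iff length_take min.absorb2 prod.inject)
  qed simp
  then have "(\<Sum>(u,v)\<in>splits w. f u * g v) = (\<Sum>i\<le>length w. (\<lambda>(u,v). f u * g v) (take i w, drop i w))"
    by (rule sum.reindex_bij_betw[symmetric])
  then show ?thesis by (simp add: fa_mul_def)
qed

definition splits3 :: "gen list \<Rightarrow> (gen list \<times> gen list \<times> gen list) set" where
  "splits3 w = {(u,v,z). u @ v @ z = w}"

lemma splits3_sub: "splits3 w \<subseteq> (\<lambda>((u,y),(v,z)). (u,v,z)) ` (Sigma (splits w) (\<lambda>(u,y). splits y))"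
  unfolding splits3_def splits_def by (auto simp: image_def)

lemma finite_splits3[simp]: "finite (splits3 w)"
proof -
  have "finite (Sigma (splits w) (\<lambda>(u,y). splits y))" by (auto intro!: finite_SigmaI)
  then show ?thesis using splits3_sub finite_subset by blast
qed

lemma fa_mul_assoc: "fa_mul (fa_mul f g) h = fa_mul f (fa_mul g h)"
proof
  fix w
  have "fa_mul (fa_mul f g) h w = (\<Sum>xz\<in>splits w. \<Sum>uv\<in>splits (fst xz). f (fst uv) * g (snd uv) * h (snd xz))"
    by (simp add: fa_mul_splits sum_distrib_right case_prod_unfold)
  also have "\<dots> = (\<Sum>(xz,uv)\<in>Sigma (splits w) (\<lambda>xz. splits (fst xz)). f (fst uv) * g (snd uv) * h (snd xz))"
    by (rule sum.Sigma) auto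
  also have "\<dots> = (\<Sum>((x,z),(u,v))\<in>Sigma (splits w) (\<lambda>xz. splits (fst xz)). f u * g v * h z)"
    by (simp add: case_prod_unfold)
  also have "\<dots> = (\<Sum>(u,v,z)\<in>splits3 w. f u * g v * h z)"
    by (rule sum.reindex_bij_witness[where i="\<lambda>(u,v,z). ((u@v,z),(u,v))" and j="\<lambda>((x,z),(u,v)). (u,v,z)"])
       (auto simp: splits_def splits3_def)
  finally have L: "fa_mul (fa_mul f g) h w = (\<Sum>(u,v,z)\<in>splits3 w. f u * g v * h z)" .
  have "fa_mul f (fa_mul g h) w = (\<Sum>uy\<in>splits w. \<Sum>vz\<in>splits (snd uy). f (fst uy) * g (fst vz) * h (snd vz))"
    by (simp add: fa_mul_splits sum_distrib_left case_prod_unfold mult.assoc)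
  also have "\<dots> = (\<Sum>(uy,vz)\<in>Sigma (splits w) (\<lambda>uy. splits (snd uy)). f (fst uy) * g (fst vz) * h (snd vz))"
    by (rule sum.Sigma) auto
  also have "\<dots> = (\<Sum>((u,y),(v,z))\<in>Sigma (splits w) (\<lambda>uy. splits (snd uy)). f u * g v * h z)"
    by (simp add: case_prod_unfold)
  also have "\<dots> = (\<Sum>(u,v,z)\<in>splits3 w. f u * g v * h z)"
    by (rule sum.reindex_bij_witness[where i="\<lambda>(u,v,z). ((u,v@z),(v,z))" and j="\<lambda>((u,y),(v,z)). (u,v,z)"])
       (auto simp: splits_def splits3_def)
  finally show "fa_mul (fa_mul f g) h w = fa_mul f (fa_mul g h) w" using L by simp
qed

lemma fa_mul_add_right: "fa_mul f (fa_add g h) = fa_add (fa_mul f g) (fa_mul f h)"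
  by (auto simp: fa_mul_def fa_add_def algebra_simps sum.distrib)
lemma fa_mul_add_left: "fa_mul (fa_add f g) h = fa_add (fa_mul f h) (fa_mul g h)"
  by (auto simp: fa_mul_def fa_add_def algebra_simps sum.distrib)
lemma fa_mul_diff_right: "fa_mul f (fa_diff g h) = fa_diff (fa_mul f g) (fa_mul f h)"
  by (auto simp: fa_mul_def fa_diff_def algebra_simps sum_subtractf)
lemma fa_mul_diff_left: "fa_mul (fa_diff f g) h = fa_diff (fa_mul f h) (fa_mul g h)"
  by (auto simp: fa_mul_def fa_diff_def algebra_simps sum_subtractf)
lemma fa_mul_smul_right: "fa_mul f (fa_smul c g) = fa_smul c (fa_mul f g)"
  by (auto simp: fa_mul_def fa_smul_def algebra_simps sum_distrib_left)
lemma fa_mul_smul_left: "fa_mul (fa_smul c f) g = fa_smul c (fa_mul f g)"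
  by (auto simp: fa_mul_def fa_smul_def algebra_simps sum_distrib_left)
lemma fa_mul_zero_right: "fa_mul f (\<lambda>w. 0) = (\<lambda>w. 0)"
  by (auto simp: fa_mul_def)
lemma fa_mul_zero_left: "fa_mul (\<lambda>w. 0) f = (\<lambda>w. 0)"
  by (auto simp: fa_mul_def)
lemma fa_mul_sum_right: "fa_mul f (\<lambda>w. \<Sum>s\<in>T. c s * g s w) = (\<lambda>w. \<Sum>s\<in>T. c s * fa_mul f (g s) w)"
  unfolding fa_mul_def by (simp add: sum_distrib_left algebra_simps sum.swap[of _ T])
lemma fa_mul_sum_left: "fa_mul (\<lambda>w. \<Sum>s\<in>T. c s * g s w) f = (\<lambda>w. \<Sum>s\<in>T. c s * fa_mul (g s) f w)"
  unfolding fa_mul_def by (simp add: sum_distrib_left sum_distrib_right algebra_simps sum.swap[of _ T])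

lemma fa_mul_one_left[simp]: "fa_mul fa_one f = f"
proof
  fix w
  have "fa_mul fa_one f w = (\<Sum>(u,v)\<in>splits w. if u = [] then f v else 0)"
    by (auto simp: fa_mul_splits fa_one_def case_prod_unfold intro!: sum.cong)
  also have "\<dots> = (\<Sum>p\<in>splits w. if p = ([], w) then f w else 0)"
    by (rule sum.cong) (auto simp: splits_def split: if_splits)
  also have "\<dots> = f w" by (subst sum.delta) (auto simp: splits_def[symmetric], auto simp: splits_def)
  finally show "fa_mul fa_one f w = f w" .
qed

lemma fa_mul_one_right[simp]: "fa_mul f fa_one = f"
proof
  fix w
  have "fa_mul f fa_one w = (\<Sum>(u,v)\<in>splits w. if v = [] then f u else 0)"
    by (auto simp: fa_mul_splits fa_one_def case_prod_unfold intro!: sum.cong)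
  also have "\<dots> = (\<Sum>p\<in>splits w. if p = (w, []) then f w else 0)"
    by (rule sum.cong) (auto simp: splits_def split: if_splits)
  also have "\<dots> = f w" by (subst sum.delta) (auto simp: splits_def[symmetric], auto simp: splits_def)
  finally show "fa_mul f fa_one w = f w" .
qed

lemma fa_pow_Suc_right: "fa_pow f (Suc n) = fa_mul (fa_pow f n) f"
  by (induction n) (simp_all add: fa_mul_assoc[symmetric])

lemma fa_pow_add: "fa_pow f (m + n) = fa_mul (fa_pow f m) (fa_pow f n)"
  by (induction m) (simp_all add: fa_mul_assoc)

lemma poly_add: "f \<in> fa_poly \<Longrightarrow> g \<in> fa_poly \<Longrightarrow> fa_add f g \<in> fa_poly"
proof -
  assume "f \<in> fa_poly" "g \<in> fa_poly"
  then have "finite ({w. f w \<noteq> 0} \<union> {w. g w \<noteq> 0})" by (simp add: fa_poly_def)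
  moreover have "{w. fa_add f g w \<noteq> 0} \<subseteq> {w. f w \<noteq> 0} \<union> {w. g w \<noteq> 0}" by (auto simp: fa_add_def)
  ultimately show ?thesis unfolding fa_poly_def by (auto intro: finite_subset)
qed
lemma poly_diff: "f \<in> fa_poly \<Longrightarrow> g \<in> fa_poly \<Longrightarrow> fa_diff f g \<in> fa_poly"
proof -
  assume "f \<in> fa_poly" "g \<in> fa_poly"
  then have "finite ({w. f w \<noteq> 0} \<union> {w. g w \<noteq> 0})" by (simp add: fa_poly_def)
  moreover have "{w. fa_diff f g w \<noteq> 0} \<subseteq> {w. f w \<noteq> 0} \<union> {w. g w \<noteq> 0}" by (auto simp: fa_diff_def)
  ultimately show ?thesis unfolding fa_poly_def by (auto intro: finite_subset)
qed
lemma poly_smul: "f \<in> fa_poly \<Longrightarrow> fa_smul c f \<in> fa_poly"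
  unfolding fa_poly_def fa_smul_def by (auto elim!: finite_subset[rotated])
lemma poly_one: "fa_one \<in> fa_poly"
  unfolding fa_poly_def fa_one_def by auto
lemma poly_gen: "fa_gen x \<in> fa_poly"
  unfolding fa_poly_def fa_gen_def by auto
lemma poly_mul: assumes "f \<in> fa_poly" "g \<in> fa_poly" shows "fa_mul f g \<in> fa_poly"
proof -
  have "{w. fa_mul f g w \<noteq> 0} \<subseteq> (\<lambda>(u,v). u @ v) ` ({w. f w \<noteq> 0} \<times> {w. g w \<noteq> 0})"
  proof
    fix w assume "w \<in> {w. fa_mul f g w \<noteq> 0}"
    then have "(\<Sum>(u,v)\<in>splits w. f u * g v) \<noteq> 0" by (simp add: fa_mul_splits)
    then obtain p where "p \<in> splits w" "(\<lambda>(u,v). f u * g v) p \<noteq> 0" by (meson sum.neutral)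
    then show "w \<in> (\<lambda>(u,v). u @ v) ` ({w. f w \<noteq> 0} \<times> {w. g w \<noteq> 0})"
      by (auto simp: splits_def image_def)
  qed
  moreover have "finite ((\<lambda>(u,v). u @ v) ` ({w. f w \<noteq> 0} \<times> {w. g w \<noteq> 0}))"
    using assms by (auto simp: fa_poly_def)
  ultimately show ?thesis unfolding fa_poly_def by (auto elim: finite_subset)
qed
lemma poly_pow: "f \<in> fa_poly \<Longrightarrow> fa_pow f n \<in> fa_poly"
  by (induction n) (auto simp: poly_one poly_mul)
lemma poly_zero: "(\<lambda>w. 0) \<in> fa_poly"
  by (simp add: fa_poly_def)
lemma poly_sum: "finite T \<Longrightarrow> (\<forall>s\<in>T. g s \<in> fa_poly) \<Longrightarrow> (\<lambda>w. \<Sum>s\<in>T. c s * g s w) \<in> fa_poly"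
proof (induction T rule: finite_induct)
  case empty then show ?case by (simp add: poly_zero)
next
  case (insert x F)
  have "(\<lambda>w. \<Sum>s\<in>insert x F. c s * g s w) = fa_add (fa_smul (c x) (g x)) (\<lambda>w. \<Sum>s\<in>F. c s * g s w)"
    using insert by (simp add: fa_add_def fa_smul_def)
  then show ?case using insert by (simp add: poly_add poly_smul)
qed

lemma poly_central: "aw_central q X Y Z \<in> fa_poly" if "X \<in> fa_poly" "Y \<in> fa_poly" "Z \<in> fa_poly"
  using that unfolding aw_central_def by (intro poly_smul poly_add poly_diff poly_mul) auto
lemma poly_alpha: "aw_alpha q \<in> fa_poly" and poly_beta: "aw_beta q \<in> fa_poly" and poly_gamma: "aw_gamma q \<in> fa_poly"
  unfolding aw_alpha_def aw_beta_def aw_gamma_def by (auto intro!: poly_central poly_gen)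

definition subsp :: "('k::field) fa set \<Rightarrow> bool" where
  "subsp V \<longleftrightarrow> (\<lambda>w. 0) \<in> V \<and> (\<forall>f\<in>V. \<forall>g\<in>V. fa_add f g \<in> V) \<and> (\<forall>c. \<forall>f\<in>V. fa_smul c f \<in> V)"

lemma subsp_sum: assumes "subsp V" shows "finite T \<Longrightarrow> (\<forall>s\<in>T. g s \<in> V) \<Longrightarrow> (\<lambda>w. \<Sum>s\<in>T. c s * g s w) \<in> V"
proof (induction T rule: finite_induct)
  case empty then show ?case using assms by (simp add: subsp_def)
next
  case (insert x F)
  have "(\<lambda>w. \<Sum>s\<in>insert x F. c s * g s w) = fa_add (fa_smul (c x) (g x)) (\<lambda>w. \<Sum>s\<in>F. c s * g s w)"
    using insert by (simp add: fa_add_def fa_smul_def)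
  then show ?case using insert assms by (simp add: subsp_def)
qed

lemma subsp_diff: "subsp V \<Longrightarrow> f \<in> V \<Longrightarrow> g \<in> V \<Longrightarrow> fa_diff f g \<in> V"
proof -
  assume a: "subsp V" "f \<in> V" "g \<in> V"
  have "fa_diff f g = fa_add f (fa_smul (-1) g)" by (auto simp: fa_diff_def fa_add_def fa_smul_def)
  then show ?thesis using a by (simp add: subsp_def)
qed

lemma span_sub: assumes "subsp V" "S \<subseteq> V" shows "fa_span S \<subseteq> V"
proof
  fix f assume "f \<in> fa_span S"
  then obtain T c where "finite T" "T \<subseteq> S" "f = (\<lambda>w. \<Sum>s\<in>T. c s * s w)" unfolding fa_span_def by auto
  then show "f \<in> V" using subsp_sum[OF assms(1), of T "\<lambda>s. s" c] assms(2) by auto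
qed

lemma subsp_span: "subsp (fa_span S)"
  unfolding subsp_def
proof (intro conjI ballI allI)
  show "(\<lambda>w. 0) \<in> fa_span S" unfolding fa_span_def by (intro CollectI exI[of _ "{}"]) auto
next
  fix f g assume "f \<in> fa_span S" "g \<in> fa_span S"
  then obtain T1 c1 T2 c2 where t: "finite T1" "T1 \<subseteq> S" "f = (\<lambda>w. \<Sum>s\<in>T1. c1 s * s w)"
     "finite T2" "T2 \<subseteq> S" "g = (\<lambda>w. \<Sum>s\<in>T2. c2 s * s w)" unfolding fa_span_def by blast
  define c where "c s = (if s \<in> T1 then c1 s else 0) + (if s \<in> T2 then c2 s else 0)" for s
  have "fa_add f g = (\<lambda>w. \<Sum>s\<in>T1 \<union> T2. c s * s w)"
  proof
    fix w
    have "(\<Sum>s\<in>T1 \<union> T2. c s * s w) = (\<Sum>s\<in>T1 \<union> T2. (if s \<in> T1 then c1 s * s w else 0) + (if s \<in> T2 then c2 s * s w else 0))"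
      unfolding c_def by (rule sum.cong) (auto simp: algebra_simps)
    also have "\<dots> = (\<Sum>s\<in>T1 \<union> T2. (if s \<in> T1 then c1 s * s w else 0)) + (\<Sum>s\<in>T1 \<union> T2. (if s \<in> T2 then c2 s * s w else 0))"
      by (rule sum.distrib)
    also have "\<dots> = (\<Sum>s\<in>T1. c1 s * s w) + (\<Sum>s\<in>T2. c2 s * s w)"
      using t by (simp add: sum.inter_restrict[symmetric] Int_absorb1 Int_absorb2)
    finally show "fa_add f g w = (\<Sum>s\<in>T1 \<union> T2. c s * s w)" using t by (simp add: fa_add_def)
  qed
  then show "fa_add f g \<in> fa_span S" unfolding fa_span_def using t
    by (intro CollectI exI[of _ "T1 \<union> T2"] exI[of _ c]) auto
next
  fix a f assume "f \<in> fa_span S"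
  then obtain T c1 where t: "finite T" "T \<subseteq> S" "f = (\<lambda>w. \<Sum>s\<in>T. c1 s * s w)" unfolding fa_span_def by blast
  have "fa_smul a f = (\<lambda>w. \<Sum>s\<in>T. (a * c1 s) * s w)" using t by (simp add: fa_smul_def sum_distrib_left algebra_simps)
  then show "fa_smul a f \<in> fa_span S" unfolding fa_span_def using t
    by (intro CollectI exI[of _ T] exI[of _ "\<lambda>s. a * c1 s"]) auto
qed

lemma span_base: "s \<in> S \<Longrightarrow> s \<in> fa_span S"
  unfolding fa_span_def by (intro CollectI exI[of _ "{s}"] exI[of _ "\<lambda>_. 1"]) auto

lemma span_mono: "S \<subseteq> S' \<Longrightarrow> fa_span S \<subseteq> fa_span S'"
  by (meson span_base span_sub subset_iff subsp_span)

abbreviation "IG q \<equiv> {fa_mul (fa_mul a r) b | a r b. a \<in> fa_poly \<and> b \<in> fa_poly \<and> r \<in> aw_rels q}"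

lemma subsp_ideal: "subsp (aw_ideal q)"
  unfolding aw_ideal_def by (rule subsp_span)

lemma ideal_zero: "(\<lambda>w. 0) \<in> aw_ideal q"
  using subsp_ideal unfolding subsp_def by blast
lemma ideal_add: "f \<in> aw_ideal q \<Longrightarrow> g \<in> aw_ideal q \<Longrightarrow> fa_add f g \<in> aw_ideal q"
  using subsp_ideal unfolding subsp_def by blast
lemma ideal_smul: "f \<in> aw_ideal q \<Longrightarrow> fa_smul c f \<in> aw_ideal q"
  using subsp_ideal unfolding subsp_def by blast
lemma ideal_diff: "f \<in> aw_ideal q \<Longrightarrow> g \<in> aw_ideal q \<Longrightarrow> fa_diff f g \<in> aw_ideal q"
  using subsp_ideal subsp_diff by blast

lemma IG_mem: "a \<in> fa_poly \<Longrightarrow> b \<in> fa_poly \<Longrightarrow> r \<in> aw_rels q \<Longrightarrow> fa_mul (fa_mul a r) b \<in> aw_ideal q"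
  unfolding aw_ideal_def by (rule span_base) blast

lemma ideal_mul_left: assumes "p \<in> fa_poly" "f \<in> aw_ideal q" shows "fa_mul p f \<in> aw_ideal q"
proof -
  have "subsp {f. fa_mul p f \<in> aw_ideal q}"
    unfolding subsp_def
    by (auto simp: fa_mul_zero_right fa_mul_add_right fa_mul_smul_right ideal_zero ideal_add ideal_smul)
  moreover have "IG q \<subseteq> {f. fa_mul p f \<in> aw_ideal q}"
    using assms(1) by (auto simp: fa_mul_assoc[symmetric] intro!: IG_mem poly_mul)
  ultimately show ?thesis using span_sub assms(2) unfolding aw_ideal_def by blast
qed

lemma ideal_mul_right: assumes "p \<in> fa_poly" "f \<in> aw_ideal q" shows "fa_mul f p \<in> aw_ideal q"
proof -
  have "subsp {f. fa_mul f p \<in> aw_ideal q}"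
    unfolding subsp_def
    by (auto simp: fa_mul_zero_left fa_mul_add_left fa_mul_smul_left ideal_zero ideal_add ideal_smul)
  moreover have "IG q \<subseteq> {f. fa_mul f p \<in> aw_ideal q}"
  proof
    fix x assume "x \<in> IG q"
    then obtain a r b where h: "x = fa_mul (fa_mul a r) b" "a \<in> fa_poly" "b \<in> fa_poly" "r \<in> aw_rels q" by blast
    then have "fa_mul x p = fa_mul (fa_mul a r) (fa_mul b p)" by (simp add: fa_mul_assoc)
    then show "x \<in> {f. fa_mul f p \<in> aw_ideal q}" using h assms(1) by (auto intro!: IG_mem poly_mul)
  qed
  ultimately show ?thesis using span_sub assms(2) unfolding aw_ideal_def by blast
qed

lemma rel_in_ideal: "r \<in> aw_rels q \<Longrightarrow> r \<in> aw_ideal q"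
  using IG_mem[of fa_one fa_one r q] by (simp add: poly_one)

type_synonym idx = "nat \<times> nat \<times> nat \<times> nat \<times> nat \<times> nat"

fun deg :: "idx \<Rightarrow> nat" where "deg (i,j,k,r,s,t) = i+j+k+r+s+t"

definition ev :: "idx \<Rightarrow> idx \<Rightarrow> 'k::field" where
  "ev m = (\<lambda>w. if w = m then 1 else 0)"

definition fin :: "('a \<Rightarrow> 'k::field) \<Rightarrow> bool" where
  "fin v \<longleftrightarrow> finite {m. v m \<noteq> 0}"

definition lin :: "('a \<Rightarrow> 'b \<Rightarrow> 'k::field) \<Rightarrow> ('a \<Rightarrow> 'k) \<Rightarrow> 'b \<Rightarrow> 'k" where
  "lin f v = (\<lambda>w. \<Sum>m\<in>{m. v m \<noteq> 0}. v m * f m w)"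

fun incA :: "idx \<Rightarrow> idx" where "incA (i,j,k,r,s,t) = (Suc i,j,k,r,s,t)"
fun incR :: "idx \<Rightarrow> idx" where "incR (i,j,k,r,s,t) = (i,j,k,Suc r,s,t)"
fun incS :: "idx \<Rightarrow> idx" where "incS (i,j,k,r,s,t) = (i,j,k,r,Suc s,t)"
fun incT :: "idx \<Rightarrow> idx" where "incT (i,j,k,r,s,t) = (i,j,k,r,s,Suc t)"

definition LA :: "(idx \<Rightarrow> 'k::field) \<Rightarrow> idx \<Rightarrow> 'k" where "LA = lin (\<lambda>m. ev (incA m))"
definition LR :: "(idx \<Rightarrow> 'k::field) \<Rightarrow> idx \<Rightarrow> 'k" where "LR = lin (\<lambda>m. ev (incR m))"
definition LS :: "(idx \<Rightarrow> 'k::field) \<Rightarrow> idx \<Rightarrow> 'k" where "LS = lin (\<lambda>m. ev (incS m))"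
definition LT :: "(idx \<Rightarrow> 'k::field) \<Rightarrow> idx \<Rightarrow> 'k" where "LT = lin (\<lambda>m. ev (incT m))"

definition dq :: "'k::field \<Rightarrow> 'k" where "dq q = q^2 - inverse q ^ 2"
definition Kq :: "'k::field \<Rightarrow> 'k" where "Kq q = q * dq q"
definition Kq' :: "'k::field \<Rightarrow> 'k" where "Kq' q = inverse q * dq q"
definition g0 :: "'k::field \<Rightarrow> 'k" where "g0 q = inverse (q + inverse q)"

lemma finite_idx_le: "finite (idx_le n)"
proof -
  have "idx_le n \<subseteq> {..n} \<times> {..n} \<times> {..n} \<times> {..n} \<times> {..n} \<times> {..n}"
    by (auto simp: idx_le_def)
  then show ?thesis by (rule finite_subset) auto
qed

lemma deg_le_idx: "m \<in> idx_le n \<longleftrightarrow> deg m \<le> n"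
  by (cases m) (auto simp: idx_le_def)

function vBC :: "'k::field \<Rightarrow> bool \<Rightarrow> idx \<Rightarrow> idx \<Rightarrow> 'k" where
  "vBC q False (0,j,k,r,s,t) = ev (0,Suc j,k,r,s,t)"
| "vBC q False (Suc i,j,k,r,s,t) = (\<lambda>w. q^2 * LA (vBC q False (i,j,k,r,s,t)) w
      - Kq q * g0 q * ev (i,j,k,r,s,Suc t) w + Kq q * vBC q True (i,j,k,r,s,t) w)"
| "vBC q True (Suc i,j,k,r,s,t) = (\<lambda>w. inverse q ^ 2 * LA (vBC q True (i,j,k,r,s,t)) w
      + Kq' q * g0 q * ev (i,j,k,r,Suc s,t) w - Kq' q * vBC q False (i,j,k,r,s,t) w)"
| "vBC q True (0,0,k,r,s,t) = ev (0,0,Suc k,r,s,t)"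
| "vBC q True (0,Suc j,k,r,s,t) = (\<lambda>w. q^2 * (\<Sum>m'\<in>idx_le (Suc (j+k+r+s+t)). vBC q True (0,j,k,r,s,t) m' * vBC q False m' w)
      - Kq q * g0 q * ev (0,j,k,Suc r,s,t) w + Kq q * ev (Suc 0,j,k,r,s,t) w)"
  by pat_completeness auto
termination
  by (relation "measure (\<lambda>(q,b,m). 2 * deg m + (if b then 1 else 0))")
     (auto simp: deg_le_idx)

lemma lin_super: "finite S \<Longrightarrow> {m. v m \<noteq> 0} \<subseteq> S \<Longrightarrow> lin f v w = (\<Sum>m\<in>S. v m * f m w)"
  unfolding lin_def by (rule sum.mono_neutral_left) auto

lemma lin_ev[simp]: "lin f (ev m) = f m"
proof
  fix w show "lin f (ev m) w = f m w"
    by (subst lin_super[of "{m}"]) (auto simp: ev_def)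
qed

lemma fin_ev[simp]: "fin (ev m)"
  by (simp add: fin_def ev_def)
lemma fin_zero[simp]: "fin (\<lambda>w. 0)"
  by (simp add: fin_def)

lemma fin_add[intro]: "fin u \<Longrightarrow> fin v \<Longrightarrow> fin (\<lambda>w. u w + v w)"
  unfolding fin_def by (rule finite_subset[of _ "{m. u m \<noteq> 0} \<union> {m. v m \<noteq> 0}"]) auto
lemma fin_diff[intro]: "fin u \<Longrightarrow> fin v \<Longrightarrow> fin (\<lambda>w. u w - v w)"
  unfolding fin_def by (rule finite_subset[of _ "{m. u m \<noteq> 0} \<union> {m. v m \<noteq> 0}"]) auto
lemma fin_smul[intro]: "fin u \<Longrightarrow> fin (\<lambda>w. c * u w)"
  unfolding fin_def by (rule finite_subset[of _ "{m. u m \<noteq> 0}"]) auto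

lemma lin_add: assumes "fin u" "fin v" shows "lin f (\<lambda>w. u w + v w) = (\<lambda>x. lin f u x + lin f v x)"
proof
  fix x
  let ?S = "{m. u m \<noteq> 0} \<union> {m. v m \<noteq> 0}"
  have fs: "finite ?S" using assms by (simp add: fin_def)
  have "lin f (\<lambda>w. u w + v w) x = (\<Sum>m\<in>?S. (u m + v m) * f m x)"
    by (rule lin_super[OF fs]) auto
  also have "\<dots> = (\<Sum>m\<in>?S. u m * f m x) + (\<Sum>m\<in>?S. v m * f m x)"
    by (simp add: algebra_simps sum.distrib)
  also have "\<dots> = lin f u x + lin f v x"
    by (subst (1 2) lin_super[OF fs]) auto
  finally show "lin f (\<lambda>w. u w + v w) x = lin f u x + lin f v x" .
qed

lemma lin_diff: assumes "fin u" "fin v" shows "lin f (\<lambda>w. u w - v w) = (\<lambda>x. lin f u x - lin f v x)"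
proof
  fix x
  let ?S = "{m. u m \<noteq> 0} \<union> {m. v m \<noteq> 0}"
  have fs: "finite ?S" using assms by (simp add: fin_def)
  have "lin f (\<lambda>w. u w - v w) x = (\<Sum>m\<in>?S. (u m - v m) * f m x)"
    by (rule lin_super[OF fs]) auto
  also have "\<dots> = (\<Sum>m\<in>?S. u m * f m x) - (\<Sum>m\<in>?S. v m * f m x)"
    by (simp add: algebra_simps sum_subtractf)
  also have "\<dots> = lin f u x - lin f v x"
    by (subst (1 2) lin_super[OF fs]) auto
  finally show "lin f (\<lambda>w. u w - v w) x = lin f u x - lin f v x" .
qed

lemma lin_smul: "lin f (\<lambda>w. c * u w) = (\<lambda>x. c * lin f u x)"
proof (cases "c = 0")
  case True then show ?thesis by (simp add: lin_def)
next
  case False then show ?thesis by (simp add: lin_def sum_distrib_left mult.assoc)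
qed

lemma lin_zero[simp]: "lin f (\<lambda>w. 0) = (\<lambda>w. 0)"
  by (simp add: lin_def)

lemma lin_fadd: "lin (\<lambda>m w. F m w + G m w) v = (\<lambda>w. lin F v w + lin G v w)"
  by (simp add: lin_def algebra_simps sum.distrib)
lemma lin_fdiff: "lin (\<lambda>m w. F m w - G m w) v = (\<lambda>w. lin F v w - lin G v w)"
  by (simp add: lin_def algebra_simps sum_subtractf)
lemma lin_fsmul: "lin (\<lambda>m w. c * F m w) v = (\<lambda>w. c * lin F v w)"
  by (simp add: lin_def algebra_simps sum_distrib_left)

lemma lin_cong: "(\<And>m. v m \<noteq> 0 \<Longrightarrow> f m = g m) \<Longrightarrow> lin f v = lin g v"
  unfolding lin_def by (auto intro!: sum.cong)

lemma fin_lin: assumes "fin v" "\<And>m. fin (f m)" shows "fin (lin f v)"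
proof -
  have "{x. lin f v x \<noteq> 0} \<subseteq> (\<Union>m\<in>{m. v m \<noteq> 0}. {x. f m x \<noteq> 0})"
  proof
    fix x assume "x \<in> {x. lin f v x \<noteq> 0}"
    then have "(\<Sum>m\<in>{m. v m \<noteq> 0}. v m * f m x) \<noteq> 0" by (simp add: lin_def)
    then obtain m where "m \<in> {m. v m \<noteq> 0}" "v m * f m x \<noteq> 0" by (meson sum.neutral)
    then show "x \<in> (\<Union>m\<in>{m. v m \<noteq> 0}. {x. f m x \<noteq> 0})" by auto
  qed
  moreover have "finite (\<Union>m\<in>{m. v m \<noteq> 0}. {x. f m x \<noteq> 0})"
    using assms by (auto simp: fin_def)
  ultimately show ?thesis unfolding fin_def by (rule finite_subset)
qed

lemma lin_lin: assumes "fin v" "\<And>m. fin (g m)" shows "lin f (lin g v) = lin (\<lambda>m. lin f (g m)) v"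
proof
  fix x
  let ?S = "\<Union>m\<in>{m. v m \<noteq> 0}. {y. g m y \<noteq> 0}"
  have fS: "finite ?S" using assms by (auto simp: fin_def)
  have sub: "{y. lin g v y \<noteq> 0} \<subseteq> ?S"
  proof
    fix y assume "y \<in> {y. lin g v y \<noteq> 0}"
    then have "(\<Sum>m\<in>{m. v m \<noteq> 0}. v m * g m y) \<noteq> 0" by (simp add: lin_def)
    then obtain m where "m \<in> {m. v m \<noteq> 0}" "v m * g m y \<noteq> 0" by (meson sum.neutral)
    then show "y \<in> ?S" by auto
  qed
  have "lin f (lin g v) x = (\<Sum>y\<in>?S. lin g v y * f y x)" by (rule lin_super[OF fS sub])
  also have "\<dots> = (\<Sum>y\<in>?S. \<Sum>m\<in>{m. v m \<noteq> 0}. v m * g m y * f y x)"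
    by (simp add: lin_def sum_distrib_right)
  also have "\<dots> = (\<Sum>m\<in>{m. v m \<noteq> 0}. v m * (\<Sum>y\<in>?S. g m y * f y x))"
    by (subst sum.swap) (simp add: sum_distrib_left mult.assoc)
  also have "\<dots> = (\<Sum>m\<in>{m. v m \<noteq> 0}. v m * lin f (g m) x)"
  proof (rule sum.cong[OF refl])
    fix m assume "m \<in> {m. v m \<noteq> 0}"
    then have "{y. g m y \<noteq> 0} \<subseteq> ?S" by auto
    then show "v m * (\<Sum>y\<in>?S. g m y * f y x) = v m * lin f (g m) x"
      using lin_super[OF fS, of "g m" f x] by simp
  qed
  finally show "lin f (lin g v) x = lin (\<lambda>m. lin f (g m)) v x" by (simp add: lin_def)
qed

lemma lin_zero_pt: "(\<And>m. v m \<noteq> 0 \<Longrightarrow> f m w = 0) \<Longrightarrow> lin f v w = 0"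
  unfolding lin_def by (auto intro!: sum.neutral)

lemma lin_add_pt: "fin u \<Longrightarrow> fin v \<Longrightarrow> lin f (\<lambda>w. u w + v w) x = lin f u x + lin f v x"
  by (simp add: lin_add)
lemma lin_diff_pt: "fin u \<Longrightarrow> fin v \<Longrightarrow> lin f (\<lambda>w. u w - v w) x = lin f u x - lin f v x"
  by (simp add: lin_diff)
lemma lin_smul_pt: "lin f (\<lambda>w. c * u w) x = c * lin f u x"
  by (simp add: lin_smul)

abbreviation vB :: "'k::field \<Rightarrow> idx \<Rightarrow> idx \<Rightarrow> 'k" where "vB q \<equiv> vBC q False"
abbreviation vC :: "'k::field \<Rightarrow> idx \<Rightarrow> idx \<Rightarrow> 'k" where "vC q \<equiv> vBC q True"

lemma deg_incA[simp]: "deg (incA m) = Suc (deg m)"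
  by (cases m) auto

lemma LA_zero_deg: assumes "\<And>m. v m \<noteq> 0 \<Longrightarrow> Suc (deg m) < deg w" shows "LA v w = 0"
  unfolding LA_def
proof (rule lin_zero_pt)
  fix m assume "v m \<noteq> 0"
  then have "Suc (deg m) < deg w" by (rule assms)
  then have "incA m \<noteq> w" by auto
  then show "ev (incA m) w = 0" by (simp add: ev_def)
qed

lemma vBC_supp: "Suc (deg m) < deg w \<Longrightarrow> vBC q b m w = 0"
proof (induction q b m arbitrary: w rule: vBC.induct)
  case (1 q j k r s t) then show ?case by (auto simp: ev_def)
next
  case (2 q i j k r s t)
  have "LA (vBC q False (i, j, k, r, s, t)) w = 0"
    by (rule LA_zero_deg) (use 2 in \<open>force\<close>)
  then show ?case using 2 by (auto simp: ev_def)
next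
  case (3 q i j k r s t)
  have "LA (vBC q True (i, j, k, r, s, t)) w = 0"
    by (rule LA_zero_deg) (use 3 in \<open>force\<close>)
  then show ?case using 3 by (auto simp: ev_def)
next
  case (4 q k r s t) then show ?case by (auto simp: ev_def)
next
  case (5 q j k r s t)
  have "(\<Sum>m'\<in>idx_le (Suc (j+k+r+s+t)). vBC q True (0,j,k,r,s,t) m' * vBC q False m' w) = 0"
  proof (rule sum.neutral, rule ballI)
    fix m' assume m': "m' \<in> idx_le (Suc (j+k+r+s+t))"
    have dd: "Suc (deg m') < deg w" using 5(3) m' by (simp add: deg_le_idx)
    show "vBC q True (0,j,k,r,s,t) m' * vBC q False m' w = 0" using 5(2)[OF m' dd] by simp
  qed
  then show ?case using 5 by (auto simp: ev_def)
qed

lemma vBC_supp_sub: "{w. vBC q b m w \<noteq> 0} \<subseteq> idx_le (Suc (deg m))"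
proof
  fix w assume "w \<in> {w. vBC q b m w \<noteq> 0}"
  then have "\<not> Suc (deg m) < deg w" using vBC_supp[of m w q b] by auto
  then show "w \<in> idx_le (Suc (deg m))" by (simp add: deg_le_idx)
qed

lemma fin_vBC[simp]: "fin (vBC q b m)"
  unfolding fin_def by (rule finite_subset[OF vBC_supp_sub finite_idx_le])

lemma fin_LA[simp]: "fin v \<Longrightarrow> fin (LA v)"
  unfolding LA_def by (rule fin_lin) auto
lemma fin_LR[simp]: "fin v \<Longrightarrow> fin (LR v)"
  unfolding LR_def by (rule fin_lin) auto
lemma fin_LS[simp]: "fin v \<Longrightarrow> fin (LS v)"
  unfolding LS_def by (rule fin_lin) auto
lemma fin_LT[simp]: "fin v \<Longrightarrow> fin (LT v)"
  unfolding LT_def by (rule fin_lin) auto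
lemma fin_linB[simp]: "fin v \<Longrightarrow> fin (lin (vBC q b) v)"
  by (rule fin_lin) auto

lemma LA_ev[simp]: "LA (ev m) = ev (incA m)" by (simp add: LA_def)
lemma LR_ev[simp]: "LR (ev m) = ev (incR m)" by (simp add: LR_def)
lemma LS_ev[simp]: "LS (ev m) = ev (incS m)" by (simp add: LS_def)
lemma LT_ev[simp]: "LT (ev m) = ev (incT m)" by (simp add: LT_def)

lemma vC_0Suc: "vC q (0,Suc j,k,r,s,t) = (\<lambda>w. q^2 * lin (vB q) (vC q (0,j,k,r,s,t)) w
      - Kq q * g0 q * ev (0,j,k,Suc r,s,t) w + Kq q * ev (Suc 0,j,k,r,s,t) w)"
proof -
  have "\<And>w. (\<Sum>m'\<in>idx_le (Suc (j+k+r+s+t)). vC q (0,j,k,r,s,t) m' * vB q m' w) = lin (vB q) (vC q (0,j,k,r,s,t)) w"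
    by (rule lin_super[symmetric]) (use vBC_supp_sub[of q True "(0,j,k,r,s,t)"] finite_idx_le in auto)
  then show ?thesis by simp
qed

declare vBC.simps(5)[simp del]

lemma relG: "vB q (incA m) = (\<lambda>w. q^2 * LA (vB q m) w - Kq q * g0 q * LT (ev m) w + Kq q * vC q m w)"
  by (cases m) simp
lemma relB: "vC q (incA m) = (\<lambda>w. inverse q ^ 2 * LA (vC q m) w + Kq' q * g0 q * LS (ev m) w - Kq' q * vB q m w)"
  by (cases m) simp

lemma lin3a: "fin x \<Longrightarrow> fin y \<Longrightarrow> fin z \<Longrightarrow> lin f (\<lambda>w. a * x w - b * y w + c * z w) = (\<lambda>w'. a * lin f x w' - b * lin f y w' + c * lin f z w')"
  by (simp add: lin_add lin_diff lin_smul fin_add fin_diff fin_smul)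
lemma lin3b: "fin x \<Longrightarrow> fin y \<Longrightarrow> fin z \<Longrightarrow> lin f (\<lambda>w. a * x w + b * y w - c * z w) = (\<lambda>w'. a * lin f x w' + b * lin f y w' - c * lin f z w')"
  by (simp add: lin_add lin_diff lin_smul fin_add fin_diff fin_smul)

lemma LA_3a: "fin x \<Longrightarrow> fin y \<Longrightarrow> fin z \<Longrightarrow> LA (\<lambda>w. a * x w - b * y w + c * z w) = (\<lambda>w'. a * LA x w' - b * LA y w' + c * LA z w')"
  unfolding LA_def by (rule lin3a)
lemma LA_3b: "fin x \<Longrightarrow> fin y \<Longrightarrow> fin z \<Longrightarrow> LA (\<lambda>w. a * x w + b * y w - c * z w) = (\<lambda>w'. a * LA x w' + b * LA y w' - c * LA z w')"
  unfolding LA_def by (rule lin3b)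

lemma LR_3a: "fin x \<Longrightarrow> fin y \<Longrightarrow> fin z \<Longrightarrow> LR (\<lambda>w. a * x w - b * y w + c * z w) = (\<lambda>w'. a * LR x w' - b * LR y w' + c * LR z w')"
  unfolding LR_def by (rule lin3a)
lemma LR_3b: "fin x \<Longrightarrow> fin y \<Longrightarrow> fin z \<Longrightarrow> LR (\<lambda>w. a * x w + b * y w - c * z w) = (\<lambda>w'. a * LR x w' + b * LR y w' - c * LR z w')"
  unfolding LR_def by (rule lin3b)

lemma LS_3a: "fin x \<Longrightarrow> fin y \<Longrightarrow> fin z \<Longrightarrow> LS (\<lambda>w. a * x w - b * y w + c * z w) = (\<lambda>w'. a * LS x w' - b * LS y w' + c * LS z w')"
  unfolding LS_def by (rule lin3a)
lemma LS_3b: "fin x \<Longrightarrow> fin y \<Longrightarrow> fin z \<Longrightarrow> LS (\<lambda>w. a * x w + b * y w - c * z w) = (\<lambda>w'. a * LS x w' + b * LS y w' - c * LS z w')"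
  unfolding LS_def by (rule lin3b)

lemma LT_3a: "fin x \<Longrightarrow> fin y \<Longrightarrow> fin z \<Longrightarrow> LT (\<lambda>w. a * x w - b * y w + c * z w) = (\<lambda>w'. a * LT x w' - b * LT y w' + c * LT z w')"
  unfolding LT_def by (rule lin3a)
lemma LT_3b: "fin x \<Longrightarrow> fin y \<Longrightarrow> fin z \<Longrightarrow> LT (\<lambda>w. a * x w + b * y w - c * z w) = (\<lambda>w'. a * LT x w' + b * LT y w' - c * LT z w')"
  unfolding LT_def by (rule lin3b)

lemma incR_incA: "incR (incA m) = incA (incR m)" by (cases m) auto
lemma LR_LA: "fin v \<Longrightarrow> LR (LA v) = LA (LR v)"
  unfolding LR_def LA_def by (simp add: lin_lin incR_incA)

lemma LR_lin: "fin u \<Longrightarrow> (\<And>m. u m \<noteq> 0 \<Longrightarrow> F (incR m) = LR (F m)) \<Longrightarrow> (\<And>m. fin (F m)) \<Longrightarrow> lin F (LR u) = LR (lin F u)"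
proof -
  assume a: "fin u" "\<And>m. u m \<noteq> 0 \<Longrightarrow> F (incR m) = LR (F m)" "\<And>m. fin (F m)"
  have "lin F (LR u) = lin (\<lambda>m. F (incR m)) u" unfolding LR_def using a by (simp add: lin_lin)
  also have "\<dots> = lin (\<lambda>m. LR (F m)) u" by (rule lin_cong) (use a in auto)
  also have "\<dots> = LR (lin F u)" unfolding LR_def using a by (simp add: lin_lin)
  finally show ?thesis .
qed

lemma vBC_incR: "vBC q b (incR m) = LR (vBC q b m)"
proof (induction q b m rule: vBC.induct)
  case (1 q j k r s t) then show ?case by simp
next
  case (2 q i j k r s t) then show ?case by (simp add: LR_3a LR_LA)
next
  case (3 q i j k r s t) then show ?case by (simp add: LR_3b LR_LA)
next
  case (4 q k r s t) then show ?case by simp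
next
  case (5 q j k r s t)
  let ?u = "vC q (0,j,k,r,s,t)"
  have z: "(0,0,0,0,0,0) \<in> idx_le (Suc (j+k+r+s+t))" by (simp add: idx_le_def)
  have IH1: "vC q (incR (0,j,k,r,s,t)) = LR ?u" using 5(1)[OF z] .
  have "lin (vB q) (LR ?u) = LR (lin (vB q) ?u)"
  proof (rule LR_lin)
    fix m assume "?u m \<noteq> 0"
    then have "m \<in> idx_le (Suc (j+k+r+s+t))" using vBC_supp_sub[of q True "(0,j,k,r,s,t)"] by auto
    then show "vB q (incR m) = LR (vB q m)" using 5(2) by blast
  qed auto
  then show ?case using IH1 by (simp add: vC_0Suc LR_3a)
qed

lemma incS_incA: "incS (incA m) = incA (incS m)" by (cases m) auto
lemma LS_LA: "fin v \<Longrightarrow> LS (LA v) = LA (LS v)"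
  unfolding LS_def LA_def by (simp add: lin_lin incS_incA)

lemma LS_lin: "fin u \<Longrightarrow> (\<And>m. u m \<noteq> 0 \<Longrightarrow> F (incS m) = LS (F m)) \<Longrightarrow> (\<And>m. fin (F m)) \<Longrightarrow> lin F (LS u) = LS (lin F u)"
proof -
  assume a: "fin u" "\<And>m. u m \<noteq> 0 \<Longrightarrow> F (incS m) = LS (F m)" "\<And>m. fin (F m)"
  have "lin F (LS u) = lin (\<lambda>m. F (incS m)) u" unfolding LS_def using a by (simp add: lin_lin)
  also have "\<dots> = lin (\<lambda>m. LS (F m)) u" by (rule lin_cong) (use a in auto)
  also have "\<dots> = LS (lin F u)" unfolding LS_def using a by (simp add: lin_lin)
  finally show ?thesis .
qed

lemma vBC_incS: "vBC q b (incS m) = LS (vBC q b m)"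
proof (induction q b m rule: vBC.induct)
  case (1 q j k r s t) then show ?case by simp
next
  case (2 q i j k r s t) then show ?case by (simp add: LS_3a LS_LA)
next
  case (3 q i j k r s t) then show ?case by (simp add: LS_3b LS_LA)
next
  case (4 q k r s t) then show ?case by simp
next
  case (5 q j k r s t)
  let ?u = "vC q (0,j,k,r,s,t)"
  have z: "(0,0,0,0,0,0) \<in> idx_le (Suc (j+k+r+s+t))" by (simp add: idx_le_def)
  have IH1: "vC q (incS (0,j,k,r,s,t)) = LS ?u" using 5(1)[OF z] .
  have "lin (vB q) (LS ?u) = LS (lin (vB q) ?u)"
  proof (rule LS_lin)
    fix m assume "?u m \<noteq> 0"
    then have "m \<in> idx_le (Suc (j+k+r+s+t))" using vBC_supp_sub[of q True "(0,j,k,r,s,t)"] by auto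
    then show "vB q (incS m) = LS (vB q m)" using 5(2) by blast
  qed auto
  then show ?case using IH1 by (simp add: vC_0Suc LS_3a)
qed

lemma incT_incA: "incT (incA m) = incA (incT m)" by (cases m) auto
lemma LT_LA: "fin v \<Longrightarrow> LT (LA v) = LA (LT v)"
  unfolding LT_def LA_def by (simp add: lin_lin incT_incA)

lemma LT_lin: "fin u \<Longrightarrow> (\<And>m. u m \<noteq> 0 \<Longrightarrow> F (incT m) = LT (F m)) \<Longrightarrow> (\<And>m. fin (F m)) \<Longrightarrow> lin F (LT u) = LT (lin F u)"
proof -
  assume a: "fin u" "\<And>m. u m \<noteq> 0 \<Longrightarrow> F (incT m) = LT (F m)" "\<And>m. fin (F m)"
  have "lin F (LT u) = lin (\<lambda>m. F (incT m)) u" unfolding LT_def using a by (simp add: lin_lin)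
  also have "\<dots> = lin (\<lambda>m. LT (F m)) u" by (rule lin_cong) (use a in auto)
  also have "\<dots> = LT (lin F u)" unfolding LT_def using a by (simp add: lin_lin)
  finally show ?thesis .
qed

lemma vBC_incT: "vBC q b (incT m) = LT (vBC q b m)"
proof (induction q b m rule: vBC.induct)
  case (1 q j k r s t) then show ?case by simp
next
  case (2 q i j k r s t) then show ?case by (simp add: LT_3a LT_LA)
next
  case (3 q i j k r s t) then show ?case by (simp add: LT_3b LT_LA)
next
  case (4 q k r s t) then show ?case by simp
next
  case (5 q j k r s t)
  let ?u = "vC q (0,j,k,r,s,t)"
  have z: "(0,0,0,0,0,0) \<in> idx_le (Suc (j+k+r+s+t))" by (simp add: idx_le_def)
  have IH1: "vC q (incT (0,j,k,r,s,t)) = LT ?u" using 5(1)[OF z] .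
  have "lin (vB q) (LT ?u) = LT (lin (vB q) ?u)"
  proof (rule LT_lin)
    fix m assume "?u m \<noteq> 0"
    then have "m \<in> idx_le (Suc (j+k+r+s+t))" using vBC_supp_sub[of q True "(0,j,k,r,s,t)"] by auto
    then show "vB q (incT m) = LT (vB q m)" using 5(2) by blast
  qed auto
  then show ?case using IH1 by (simp add: vC_0Suc LT_3a)
qed


lemma LA_linF: "fin v \<Longrightarrow> lin (\<lambda>m. LA (F m)) v = LA (lin F v)" if "\<And>m. fin (F m)"
  unfolding LA_def using that by (simp add: lin_lin)

lemma lin_LT_ev: "lin (\<lambda>m. LT (ev m)) v = LT v" by (simp add: LT_def)
lemma lin_LS_ev: "lin (\<lambda>m. LS (ev m)) v = LS v" by (simp add: LS_def)

lemma RG_v: assumes "fin v"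
  shows "lin (vB q) (LA v) = (\<lambda>w. q^2 * LA (lin (vB q) v) w - Kq q * g0 q * LT v w + Kq q * lin (vC q) v w)"
proof -
  have "lin (vB q) (LA v) = lin (\<lambda>m. vB q (incA m)) v" unfolding LA_def using assms by (simp add: lin_lin)
  also have "\<dots> = lin (\<lambda>m w. q^2 * LA (vB q m) w - Kq q * g0 q * LT (ev m) w + Kq q * vC q m w) v" by (simp only: relG)
  also have "\<dots> = (\<lambda>w. q^2 * lin (\<lambda>m. LA (vB q m)) v w - Kq q * g0 q * lin (\<lambda>m. LT (ev m)) v w + Kq q * lin (vC q) v w)"
    by (simp only: lin_fadd lin_fdiff lin_fsmul)
  also have "\<dots> = (\<lambda>w. q^2 * LA (lin (vB q) v) w - Kq q * g0 q * LT v w + Kq q * lin (vC q) v w)"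
    using assms by (simp add: LA_linF LT_def)
  finally show ?thesis .
qed

lemma RB_v: assumes "fin v"
  shows "lin (vC q) (LA v) = (\<lambda>w. inverse q ^ 2 * LA (lin (vC q) v) w + Kq' q * g0 q * LS v w - Kq' q * lin (vB q) v w)"
proof -
  have "lin (vC q) (LA v) = lin (\<lambda>m. vC q (incA m)) v" unfolding LA_def using assms by (simp add: lin_lin)
  also have "\<dots> = lin (\<lambda>m w. inverse q ^ 2 * LA (vC q m) w + Kq' q * g0 q * LS (ev m) w - Kq' q * vB q m w) v" by (simp only: relB)
  also have "\<dots> = (\<lambda>w. inverse q ^ 2 * lin (\<lambda>m. LA (vC q m)) v w + Kq' q * g0 q * lin (\<lambda>m. LS (ev m)) v w - Kq' q * lin (vB q) v w)"
    by (simp only: lin_fadd lin_fdiff lin_fsmul)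
  also have "\<dots> = (\<lambda>w. inverse q ^ 2 * LA (lin (vC q) v) w + Kq' q * g0 q * LS v w - Kq' q * lin (vB q) v w)"
    using assms by (simp add: LA_linF LS_def)
  finally show ?thesis .
qed

lemma relA_step: assumes q: "q \<noteq> 0"
  and IH: "lin (vC q) (vB q m) = (\<lambda>w. q^2 * lin (vB q) (vC q m) w - Kq q * g0 q * ev (incR m) w + Kq q * ev (incA m) w)"
  shows "lin (vC q) (vB q (incA m)) = (\<lambda>w. q^2 * lin (vB q) (vC q (incA m)) w - Kq q * g0 q * ev (incR (incA m)) w + Kq q * ev (incA (incA m)) w)"
proof -
  have e1: "lin (vC q) (vB q (incA m)) = (\<lambda>w. q^2 * lin (vC q) (LA (vB q m)) w - Kq q * g0 q * lin (vC q) (LT (ev m)) w + Kq q * lin (vC q) (vC q m) w)"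
    by (simp only: relG) (rule lin3a; simp)
  have e2: "lin (vC q) (LA (vB q m)) = (\<lambda>w. inverse q ^ 2 * LA (lin (vC q) (vB q m)) w + Kq' q * g0 q * LS (vB q m) w - Kq' q * lin (vB q) (vB q m) w)"
    by (rule RB_v) simp
  have e3: "LA (lin (vC q) (vB q m)) = (\<lambda>w. q^2 * LA (lin (vB q) (vC q m)) w - Kq q * g0 q * LA (ev (incR m)) w + Kq q * LA (ev (incA m)) w)"
    by (simp only: IH) (rule LA_3a; simp)
  have e4: "LS (vB q m) = vB q (incS m)" by (simp add: vBC_incS)
  have e5: "lin (vC q) (LT (ev m)) = LT (vC q m)" by (simp add: vBC_incT)
  have f2: "lin (vB q) (vC q (incA m)) = (\<lambda>w. inverse q ^ 2 * lin (vB q) (LA (vC q m)) w + Kq' q * g0 q * lin (vB q) (LS (ev m)) w - Kq' q * lin (vB q) (vB q m) w)"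
    by (simp only: relB) (rule lin3b; simp)
  have f3: "lin (vB q) (LA (vC q m)) = (\<lambda>w. q^2 * LA (lin (vB q) (vC q m)) w - Kq q * g0 q * LT (vC q m) w + Kq q * lin (vC q) (vC q m) w)"
    by (rule RG_v) simp
  have f4: "lin (vB q) (LS (ev m)) = vB q (incS m)" by simp
  have g: "ev (incR (incA m)) = LA (ev (incR m))" "ev (incA (incA m)) = LA (ev (incA m))"
    by (simp_all add: incR_incA)
  show ?thesis
    apply (rule ext)
    apply (simp only: e1 e2 e3 e4 e5 f2 f3 f4 g)
    using q by (simp add: field_simps)
qed

lemma relA_idx: assumes "q \<noteq> 0"
  shows "lin (vC q) (vB q (i,j,k,r,s,t)) = (\<lambda>w. q^2 * lin (vB q) (vC q (i,j,k,r,s,t)) w - Kq q * g0 q * ev (incR (i,j,k,r,s,t)) w + Kq q * ev (incA (i,j,k,r,s,t)) w)"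
proof (induction i)
  case 0 show ?case by (simp add: vC_0Suc)
next
  case (Suc i)
  have "incA (i,j,k,r,s,t) = (Suc i,j,k,r,s,t)" by simp
  then show ?case using relA_step[OF assms Suc] by simp
qed

lemma relA: "q \<noteq> 0 \<Longrightarrow> lin (vC q) (vB q m) = (\<lambda>w. q^2 * lin (vB q) (vC q m) w - Kq q * g0 q * ev (incR m) w + Kq q * ev (incA m) w)"
proof -
  assume q: "q \<noteq> 0"
  obtain i j k r s t where "m = (i,j,k,r,s,t)" by (cases m)
  then show ?thesis using relA_idx[OF q, of i j k r s t] by simp
qed


lemma RA_v: assumes q: "q \<noteq> 0" and v: "fin v"
  shows "lin (vC q) (lin (vB q) v) = (\<lambda>w. q^2 * lin (vB q) (lin (vC q) v) w - Kq q * g0 q * LR v w + Kq q * LA v w)"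
proof -
  have "lin (vC q) (lin (vB q) v) = lin (\<lambda>m. lin (vC q) (vB q m)) v" using v by (simp add: lin_lin)
  also have "\<dots> = lin (\<lambda>m w. q^2 * lin (vB q) (vC q m) w - Kq q * g0 q * ev (incR m) w + Kq q * ev (incA m) w) v"
    by (simp only: relA[OF q])
  also have "\<dots> = (\<lambda>w. q^2 * lin (\<lambda>m. lin (vB q) (vC q m)) v w - Kq q * g0 q * lin (\<lambda>m. ev (incR m)) v w + Kq q * lin (\<lambda>m. ev (incA m)) v w)"
    by (simp only: lin_fadd lin_fdiff lin_fsmul)
  also have "\<dots> = (\<lambda>w. q^2 * lin (vB q) (lin (vC q) v) w - Kq q * g0 q * LR v w + Kq q * LA v w)"
    using v by (simp add: lin_lin LR_def LA_def)
  finally show ?thesis .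
qed

primrec opF :: "'k::field \<Rightarrow> gen \<Rightarrow> idx \<Rightarrow> idx \<Rightarrow> 'k" where
  "opF q GA = (\<lambda>m. ev (incA m))"
| "opF q GB = vB q"
| "opF q GC = vC q"

primrec wop :: "'k::field \<Rightarrow> gen list \<Rightarrow> (idx \<Rightarrow> 'k) \<Rightarrow> idx \<Rightarrow> 'k" where
  "wop q [] v = v"
| "wop q (x # u) v = lin (opF q x) (wop q u v)"

definition rep :: "'k::field \<Rightarrow> 'k fa \<Rightarrow> (idx \<Rightarrow> 'k) \<Rightarrow> idx \<Rightarrow> 'k" where
  "rep q f v = lin (\<lambda>u. wop q u v) f"

definition dl :: "gen list \<Rightarrow> 'k::field fa" where
  "dl u = (\<lambda>w. if w = u then 1 else 0)"

lemma fin_opF[simp]: "fin (opF q x m)" by (cases x) auto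

lemma fin_wop[simp]: "fin v \<Longrightarrow> fin (wop q u v)"
  by (induction u) (auto intro: fin_lin)

lemma wop_append: "wop q (u @ u') v = wop q u (wop q u' v)"
  by (induction u) auto

lemma wop_lin: "fin c \<Longrightarrow> (\<And>a. fin (G a)) \<Longrightarrow> wop q u (lin G c) = lin (\<lambda>a. wop q u (G a)) c"
proof (induction u)
  case Nil then show ?case by simp
next
  case (Cons x u)
  then show ?case by (simp add: lin_lin)
qed

lemma lin_dl[simp]: "lin f (dl u) = f u"
proof
  fix w show "lin f (dl u) w = f u w"
    by (subst lin_super[of "{u}"]) (auto simp: dl_def)
qed

lemma fin_dl[simp]: "fin (dl u)" by (simp add: fin_def dl_def)

lemma poly_fin: "f \<in> fa_poly \<longleftrightarrow> fin f" by (simp add: fa_poly_def fin_def)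

lemma lin_dl_id: assumes "fin f" shows "lin dl f = f"
proof
  fix w
  have "lin dl f w = (\<Sum>m\<in>{m. f m \<noteq> 0}. if m = w then f m else 0)"
    by (auto simp: lin_def dl_def intro!: sum.cong)
  also have "\<dots> = f w" using assms by (subst sum.delta) (auto simp: fin_def)
  finally show "lin dl f w = f w" .
qed

lemma dl_mul: "fa_mul (dl u) (dl u') = dl (u @ u')"
proof
  fix w
  have "fa_mul (dl u) (dl u') w = (\<Sum>(a,b)\<in>splits w. dl u a * dl u' b)" by (simp add: fa_mul_splits)
  also have "\<dots> = (\<Sum>p\<in>splits w. if p = (u, u') then 1 else 0)"
    by (rule sum.cong) (auto simp: dl_def split: if_splits)
  also have "\<dots> = dl (u @ u') w" by (subst sum.delta) (simp, simp add: splits_def dl_def)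
  finally show "fa_mul (dl u) (dl u') w = dl (u @ u') w" .
qed

lemma fa_mul_lin_left: "fa_mul (lin H c) g = lin (\<lambda>a. fa_mul (H a) g) c"
  unfolding lin_def by (rule fa_mul_sum_left)
lemma fa_mul_lin_right: "fa_mul g (lin H c) = lin (\<lambda>a. fa_mul g (H a)) c"
  unfolding lin_def by (rule fa_mul_sum_right)

lemma fa_mul_expand: "fin f \<Longrightarrow> fin g \<Longrightarrow> fa_mul f g = lin (\<lambda>u. lin (\<lambda>u'. dl (u @ u')) g) f"
proof -
  assume fg: "fin f" "fin g"
  have "fa_mul f g = fa_mul (lin dl f) (lin dl g)" using fg by (simp add: lin_dl_id)
  also have "\<dots> = lin (\<lambda>u. lin (\<lambda>u'. fa_mul (dl u) (dl u')) g) f"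
    apply (subst fa_mul_lin_left)
    apply (subst fa_mul_lin_right)
    using fg by (simp add: lin_dl_id)
  finally show ?thesis by (simp add: dl_mul)
qed

lemma fin_linF: "fin c \<Longrightarrow> (\<And>a. fin (H a)) \<Longrightarrow> fin (lin H c)" by (rule fin_lin)

lemma rep_lin: "fin c \<Longrightarrow> (\<And>a. fin (H a)) \<Longrightarrow> rep q (lin H c) v = lin (\<lambda>a. rep q (H a) v) c"
  unfolding rep_def by (simp add: lin_lin)

lemma rep_dl[simp]: "rep q (dl u) v = wop q u v" by (simp add: rep_def)

lemma rep_mul: assumes f: "fin f" and g: "fin g" and v: "fin v"
  shows "rep q (fa_mul f g) v = rep q f (rep q g v)"
proof -
  have "rep q (fa_mul f g) v = lin (\<lambda>u. rep q (lin (\<lambda>u'. dl (u @ u')) g) v) f"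
    unfolding fa_mul_expand[OF f g] using f g by (simp add: rep_lin fin_lin)
  also have "\<dots> = lin (\<lambda>u. lin (\<lambda>u'. wop q u (wop q u' v)) g) f"
    using g by (simp add: rep_lin wop_append)
  also have "\<dots> = rep q f (rep q g v)"
    unfolding rep_def using g v by (simp add: wop_lin)
  finally show ?thesis .
qed

lemma fin_rep[simp]: "fin f \<Longrightarrow> fin v \<Longrightarrow> fin (rep q f v)"
  unfolding rep_def by (rule fin_lin) auto

lemma rep_add: "fin f \<Longrightarrow> fin g \<Longrightarrow> rep q (fa_add f g) v = (\<lambda>y. rep q f v y + rep q g v y)"
  unfolding rep_def fa_add_def by (rule lin_add)
lemma rep_diff: "fin f \<Longrightarrow> fin g \<Longrightarrow> rep q (fa_diff f g) v = (\<lambda>y. rep q f v y - rep q g v y)"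
  unfolding rep_def fa_diff_def by (rule lin_diff)
lemma rep_smul: "rep q (fa_smul c f) v = (\<lambda>y. c * rep q f v y)"
  unfolding rep_def fa_smul_def by (rule lin_smul)
lemma rep_gen: "rep q (fa_gen x) v = lin (opF q x) v"
proof -
  have h: "fa_gen x = dl [x]" by (simp add: fa_gen_def dl_def)
  show ?thesis unfolding h by simp
qed
lemma rep_one[simp]: "rep q fa_one v = v"
proof -
  have h: "fa_one = dl []" by (simp add: fa_one_def dl_def)
  show ?thesis unfolding h by simp
qed

lemma fin_fa_add[simp]: "fin f \<Longrightarrow> fin g \<Longrightarrow> fin (fa_add f g)" by (simp add: poly_fin[symmetric] poly_add)
lemma fin_fa_diff[simp]: "fin f \<Longrightarrow> fin g \<Longrightarrow> fin (fa_diff f g)" by (simp add: poly_fin[symmetric] poly_diff)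
lemma fin_fa_smul[simp]: "fin f \<Longrightarrow> fin (fa_smul c f)" by (simp add: poly_fin[symmetric] poly_smul)
lemma fin_fa_mul[simp]: "fin f \<Longrightarrow> fin g \<Longrightarrow> fin (fa_mul f g)" by (simp add: poly_fin[symmetric] poly_mul)
lemma fin_fa_gen[simp]: "fin (fa_gen x)" by (simp add: poly_fin[symmetric] poly_gen)
lemma fin_fa_one[simp]: "fin fa_one" by (simp add: poly_fin[symmetric] poly_one)
lemma fin_fa_pow[simp]: "fin f \<Longrightarrow> fin (fa_pow f n)" by (simp add: poly_fin[symmetric] poly_pow)
lemma fin_alpha[simp]: "fin (aw_alpha q)" and fin_beta[simp]: "fin (aw_beta q)" and fin_gamma[simp]: "fin (aw_gamma q)"
  by (simp_all add: poly_fin[symmetric] poly_alpha poly_beta poly_gamma)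

lemma q_facts: assumes "(q::'k::field) \<noteq> 0" "q ^ 4 \<noteq> 1"
  shows "q ^ 2 - inverse q ^ 2 \<noteq> 0" "q + inverse q \<noteq> 0"
proof -
  have q4: "q ^ 4 = (q * q) * (q * q)" by (simp add: power4_eq_xxxx mult.assoc)
  have qi: "q * inverse q = 1" using assms(1) by simp
  show "q ^ 2 - inverse q ^ 2 \<noteq> 0"
  proof
    assume "q ^ 2 - inverse q ^ 2 = 0"
    then have "q * q = inverse q * inverse q" by (simp add: power2_eq_square)
    then have "(q * q) * (q * q) = (q * inverse q) * (q * inverse q)" by (metis mult.assoc mult.commute)
    then have "q^4 = 1" using q4 qi by simp
    then show False using assms(2) by simp
  qed
  show "q + inverse q \<noteq> 0"
  proof
    assume "q + inverse q = 0"
    then have "q = - inverse q" by (simp add: eq_neg_iff_add_eq_0)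
    then have "q * q = - (q * inverse q)" by (metis mult_minus_right)
    then have "q * q = -1" using qi by simp
    then have "q^4 = 1" using q4 by simp
    then show False using assms(2) by simp
  qed
qed

lemma LA_opF: "lin (opF q GA) v = LA v" by (simp add: LA_def)
lemma opF_B: "lin (opF q GB) v = lin (vB q) v" by simp
lemma opF_C: "lin (opF q GC) v = lin (vC q) v" by simp

lemma alg_alpha: "(q::'k::field) \<noteq> 0 \<Longrightarrow> d \<noteq> 0 \<Longrightarrow> s \<noteq> 0 \<Longrightarrow>
  s * (A + inverse d * (q * X - inverse q * (q^2 * X - q * d * inverse s * R + q * d * A))) = R"
  by (simp add: field_simps power2_eq_square)

lemma alg_beta: "(q::'k::field) \<noteq> 0 \<Longrightarrow> d \<noteq> 0 \<Longrightarrow> s \<noteq> 0 \<Longrightarrow>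
  s * (B + inverse d * (q * (inverse q ^ 2 * Y + inverse q * d * inverse s * S - inverse q * d * B) - inverse q * Y)) = S"
  by (simp add: field_simps power2_eq_square)

lemma rep_alpha: assumes q: "q \<noteq> 0" "q^4 \<noteq> 1" and v: "fin v" shows "rep q (aw_alpha q) v = LR v"
proof -
  note qf = q_facts[OF q, folded dq_def]
  have "rep q (aw_alpha q) v = (\<lambda>y. (q + inverse q) * (LA v y + inverse (dq q) *
          (q * lin (vB q) (lin (vC q) v) y - inverse q * lin (vC q) (lin (vB q) v) y)))"
    unfolding aw_alpha_def aw_central_def using v
    apply (subst rep_smul)
    apply (subst rep_add)
      apply simp
     apply simp
    apply (subst rep_smul)
    apply (subst rep_diff)
      apply simp
     apply simp
    apply (simp only: rep_smul rep_mul rep_gen fin_fa_gen)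
    apply (simp add: LA_def dq_def)
    done
  also have "\<dots> = LR v"
    by (rule ext) (simp only: RA_v[OF q(1) v] Kq_def g0_def, rule alg_alpha[OF q(1) qf])
  finally show ?thesis .
qed

lemma rep_beta: assumes q: "q \<noteq> 0" "q^4 \<noteq> 1" and v: "fin v" shows "rep q (aw_beta q) v = LS v"
proof -
  note qf = q_facts[OF q, folded dq_def]
  have "rep q (aw_beta q) v = (\<lambda>y. (q + inverse q) * (lin (vB q) v y + inverse (dq q) *
          (q * lin (vC q) (LA v) y - inverse q * LA (lin (vC q) v) y)))"
    unfolding aw_beta_def aw_central_def using v
    apply (subst rep_smul)
    apply (subst rep_add)
      apply simp
     apply simp
    apply (subst rep_smul)
    apply (subst rep_diff)
      apply simp
     apply simp
    apply (simp only: rep_smul rep_mul rep_gen fin_fa_gen)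
    apply (simp add: LA_def dq_def)
    done
  also have "\<dots> = LS v"
    by (rule ext) (simp only: RB_v[OF v] Kq'_def g0_def, rule alg_beta[OF q(1) qf])
  finally show ?thesis .
qed

lemma rep_gamma: assumes q: "q \<noteq> 0" "q^4 \<noteq> 1" and v: "fin v" shows "rep q (aw_gamma q) v = LT v"
proof -
  note qf = q_facts[OF q, folded dq_def]
  have "rep q (aw_gamma q) v = (\<lambda>y. (q + inverse q) * (lin (vC q) v y + inverse (dq q) *
          (q * LA (lin (vB q) v) y - inverse q * lin (vB q) (LA v) y)))"
    unfolding aw_gamma_def aw_central_def using v
    apply (subst rep_smul)
    apply (subst rep_add)
      apply simp
     apply simp
    apply (subst rep_smul)
    apply (subst rep_diff)
      apply simp
     apply simp
    apply (simp only: rep_smul rep_mul rep_gen fin_fa_gen)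
    apply (simp add: LA_def dq_def)
    done
  also have "\<dots> = LT v"
    by (rule ext) (simp only: RG_v[OF v] Kq_def g0_def, rule alg_alpha[OF q(1) qf])
  finally show ?thesis .
qed

lemma comm_R: "fin v \<Longrightarrow> lin (opF q x) (LR v) = LR (lin (opF q x) v)"
  by (cases x) (simp_all add: LA_def[symmetric] LR_LA LR_lin vBC_incR)
lemma comm_S: "fin v \<Longrightarrow> lin (opF q x) (LS v) = LS (lin (opF q x) v)"
  by (cases x) (simp_all add: LA_def[symmetric] LS_LA LS_lin vBC_incS)
lemma comm_T: "fin v \<Longrightarrow> lin (opF q x) (LT v) = LT (lin (opF q x) v)"
  by (cases x) (simp_all add: LA_def[symmetric] LT_LA LT_lin vBC_incT)

lemma wop_zero[simp]: "wop q u (\<lambda>_. 0) = (\<lambda>_. 0)"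
  by (induction u) auto

lemma rep_zero_vec[simp]: "rep q f (\<lambda>_. 0) = (\<lambda>_. 0)"
  by (simp add: rep_def lin_def)

lemma rep_zero_poly[simp]: "rep q (\<lambda>_. 0) v = (\<lambda>_. 0)"
  by (simp add: rep_def)

lemma rep_rel: assumes q: "q \<noteq> 0" "q^4 \<noteq> 1" and r: "r \<in> aw_rels q" and v: "fin v"
  shows "rep q r v = (\<lambda>_. 0)"
proof -
  obtain x z where xz: "r = fa_diff (fa_mul x z) (fa_mul z x)" "x \<in> {AWA, AWB, AWC}"
    "z \<in> {aw_alpha q, aw_beta q, aw_gamma q}" using r unfolding aw_rels_def by blast
  obtain g where g: "x = fa_gen g" using xz(2) by blast
  have fz: "fin z" using xz(3) by auto
  have "rep q x (rep q z v) = rep q z (rep q x v)"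
    using xz(3) q v by (auto simp: g rep_gen rep_alpha rep_beta rep_gamma comm_R comm_S comm_T fin_lin)
  then show ?thesis using v fz by (simp add: xz(1) g rep_diff rep_mul)
qed

lemma rep_ideal: assumes q: "q \<noteq> 0" "q^4 \<noteq> 1" and f: "f \<in> aw_ideal q"
  shows "fin f \<and> (\<forall>v. fin v \<longrightarrow> rep q f v = (\<lambda>_. 0))"
proof -
  let ?V = "{f. fin f \<and> (\<forall>v. fin v \<longrightarrow> rep q f v = (\<lambda>_. 0))}"
  have "subsp ?V"
    unfolding subsp_def by (auto simp: rep_add rep_smul)
  moreover have "IG q \<subseteq> ?V"
  proof
    fix y assume "y \<in> IG q"
    then obtain a r b where h: "y = fa_mul (fa_mul a r) b" "a \<in> fa_poly" "b \<in> fa_poly" "r \<in> aw_rels q" by blast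
    have fr: "fin r" using h(4) unfolding aw_rels_def by auto
    have fa: "fin a" "fin b" using h by (auto simp: poly_fin)
    show "y \<in> ?V"
      using fr fa rep_rel[OF q h(4)] by (auto simp: h(1) rep_mul)
  qed
  ultimately show ?thesis using span_sub f unfolding aw_ideal_def by blast
qed

lemma rep_pow_Suc: "fin X \<Longrightarrow> fin v \<Longrightarrow> rep q (fa_pow X (Suc n)) v = rep q X (rep q (fa_pow X n) v)"
  by (simp add: rep_mul)

lemma rep_powA: "rep q (fa_pow AWA n) (ev (a,b,c,d,e,f)) = ev (a+n,b,c,d,e,f)"
  by (induction n) (simp_all add: rep_pow_Suc rep_gen del: fa_pow.simps(2))
lemma rep_powB: "rep q (fa_pow AWB n) (ev (0,b,c,d,e,f)) = ev (0,b+n,c,d,e,f)"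
  by (induction n) (simp_all add: rep_pow_Suc rep_gen del: fa_pow.simps(2))
lemma rep_powC: "rep q (fa_pow AWC n) (ev (0,0,c,d,e,f)) = ev (0,0,c+n,d,e,f)"
  by (induction n) (simp_all add: rep_pow_Suc rep_gen del: fa_pow.simps(2))
lemma rep_powAl: "q \<noteq> 0 \<Longrightarrow> q^4 \<noteq> 1 \<Longrightarrow> rep q (fa_pow (aw_alpha q) n) (ev (a,b,c,d,e,f)) = ev (a,b,c,d+n,e,f)"
  by (induction n) (simp_all add: rep_pow_Suc rep_alpha del: fa_pow.simps(2))
lemma rep_powBe: "q \<noteq> 0 \<Longrightarrow> q^4 \<noteq> 1 \<Longrightarrow> rep q (fa_pow (aw_beta q) n) (ev (a,b,c,d,e,f)) = ev (a,b,c,d,e+n,f)"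
  by (induction n) (simp_all add: rep_pow_Suc rep_beta del: fa_pow.simps(2))
lemma rep_powGa: "q \<noteq> 0 \<Longrightarrow> q^4 \<noteq> 1 \<Longrightarrow> rep q (fa_pow (aw_gamma q) n) (ev (a,b,c,d,e,f)) = ev (a,b,c,d,e,f+n)"
  by (induction n) (simp_all add: rep_pow_Suc rep_gamma del: fa_pow.simps(2))

lemma fin_mono[simp]: "fin (aw_mono q m)"
  by (cases m) (simp add: aw_mono_def)

lemma rep_mono: assumes q: "q \<noteq> 0" "q^4 \<noteq> 1"
  shows "rep q (aw_mono q m) (ev (0,0,0,0,0,0)) = ev m"
proof -
  obtain i j k r s t where m: "m = (i,j,k,r,s,t)" by (cases m)
  show ?thesis
    by (simp add: m aw_mono_def rep_mul rep_powA rep_powB rep_powC rep_powAl[OF q] rep_powBe[OF q] rep_powGa[OF q]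
          del: fa_pow.simps)
qed

lemma rep_fsum: "finite T \<Longrightarrow> (\<And>s. fin (g s)) \<Longrightarrow>
    rep q (\<lambda>w. \<Sum>s\<in>T. c s * g s w) v = (\<lambda>y. \<Sum>s\<in>T. c s * rep q (g s) v y)"
proof (induction T rule: finite_induct)
  case empty then show ?case by simp
next
  case (insert x F)
  have fF: "fin (\<lambda>w. \<Sum>s\<in>F. c s * g s w)" using poly_sum[OF insert(1), of g c] insert(4) by (simp add: poly_fin)
  have "(\<lambda>w. \<Sum>s\<in>insert x F. c s * g s w) = fa_add (fa_smul (c x) (g x)) (\<lambda>w. \<Sum>s\<in>F. c s * g s w)"
    using insert by (simp add: fa_add_def fa_smul_def)
  then show ?case using insert fF by (simp add: rep_add rep_smul)
qed

lemma independence: assumes q: "q \<noteq> 0" "q^4 \<noteq> 1"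
  and h: "(\<lambda>w. \<Sum>m\<in>idx_le n. c m * aw_mono q m w) \<in> aw_ideal q" and m0: "m0 \<in> idx_le n"
  shows "c m0 = 0"
proof -
  have "rep q (\<lambda>w. \<Sum>m\<in>idx_le n. c m * aw_mono q m w) (ev (0,0,0,0,0,0)) = (\<lambda>_. 0)"
    using rep_ideal[OF q h] by simp
  then have "(\<lambda>y. \<Sum>m\<in>idx_le n. c m * ev m y) = (\<lambda>_. 0)"
    by (simp add: rep_fsum finite_idx_le rep_mono[OF q])
  then have "(\<Sum>m\<in>idx_le n. c m * ev m m0) = 0" by (metis (no_types, lifting))
  moreover have "(\<Sum>m\<in>idx_le n. c m * ev m m0) = c m0"
    using m0 finite_idx_le by (simp add: ev_def if_distrib[of "\<lambda>x. c _ * x"] cong: if_cong)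
  ultimately show ?thesis by simp
qed

lemma one_D: "fa_one \<in> aw_D q n"
proof (induction n)
  case 0 show ?case by (simp add: span_base)
next
  case (Suc n)
  have "fa_one \<in> aw_D1 q" unfolding aw_D1_def by (rule span_base) simp
  then have "fa_mul fa_one fa_one \<in> aw_D q (Suc n)" using Suc unfolding aw_D.simps(2) by (intro span_base) blast
  then show ?case by simp
qed

lemma mul_D: "h \<in> aw_D1 q \<Longrightarrow> k \<in> aw_D q n \<Longrightarrow> fa_mul h k \<in> aw_D q (Suc n)"
  by (auto intro!: span_base)

lemma D_Suc: "k \<in> aw_D q n \<Longrightarrow> k \<in> aw_D q (Suc n)"
proof -
  assume "k \<in> aw_D q n"
  moreover have "fa_one \<in> aw_D1 q" unfolding aw_D1_def by (rule span_base) simp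
  ultimately have "fa_mul fa_one k \<in> aw_D q (Suc n)" by (rule mul_D[rotated])
  then show ?thesis by simp
qed

lemma D_mono: "n \<le> n' \<Longrightarrow> k \<in> aw_D q n \<Longrightarrow> k \<in> aw_D q n'"
proof (induction n' rule: dec_induct)
  case base then show ?case .
next
  case (step m) then show ?case using D_Suc[of k q m] by blast
qed

lemma pow_mul_D: "X \<in> aw_D1 q \<Longrightarrow> Y \<in> aw_D q n \<Longrightarrow> fa_mul (fa_pow X i) Y \<in> aw_D q (i + n)"
proof (induction i)
  case 0 then show ?case by simp
next
  case (Suc i)
  then have "fa_mul X (fa_mul (fa_pow X i) Y) \<in> aw_D q (Suc (i + n))" by (intro mul_D) auto
  then show ?case by (simp add: fa_mul_assoc)
qed

lemma gens_D1: "AWA \<in> aw_D1 q" "AWB \<in> aw_D1 q" "AWC \<in> aw_D1 q"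
   "aw_alpha q \<in> aw_D1 q" "aw_beta q \<in> aw_D1 q" "aw_gamma q \<in> aw_D1 q"
  unfolding aw_D1_def by (auto intro: span_base)

lemma mono_D: "aw_mono q m \<in> aw_D q (deg m)"
proof -
  obtain i j k r s t where m: "m = (i,j,k,r,s,t)" by (cases m)
  have "fa_mul (fa_pow (aw_gamma q) t) fa_one \<in> aw_D q (t + 0)" by (rule pow_mul_D[OF gens_D1(6) one_D])
  then have "fa_pow (aw_gamma q) t \<in> aw_D q t" by simp
  then have "fa_mul (fa_pow (aw_beta q) s) (fa_pow (aw_gamma q) t) \<in> aw_D q (s + t)" by (rule pow_mul_D[OF gens_D1(5)])
  then have "fa_mul (fa_pow (aw_alpha q) r) (fa_mul (fa_pow (aw_beta q) s) (fa_pow (aw_gamma q) t)) \<in> aw_D q (r + (s + t))" by (rule pow_mul_D[OF gens_D1(4)])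
  then have "fa_mul (fa_pow AWC k) (fa_mul (fa_pow (aw_alpha q) r) (fa_mul (fa_pow (aw_beta q) s) (fa_pow (aw_gamma q) t))) \<in> aw_D q (k + (r + (s + t)))" by (rule pow_mul_D[OF gens_D1(3)])
  then have "fa_mul (fa_pow AWB j) (fa_mul (fa_pow AWC k) (fa_mul (fa_pow (aw_alpha q) r) (fa_mul (fa_pow (aw_beta q) s) (fa_pow (aw_gamma q) t)))) \<in> aw_D q (j + (k + (r + (s + t))))" by (rule pow_mul_D[OF gens_D1(2)])
  then have "fa_mul (fa_pow AWA i) (fa_mul (fa_pow AWB j) (fa_mul (fa_pow AWC k) (fa_mul (fa_pow (aw_alpha q) r) (fa_mul (fa_pow (aw_beta q) s) (fa_pow (aw_gamma q) t))))) \<in> aw_D q (i + (j + (k + (r + (s + t)))))" by (rule pow_mul_D[OF gens_D1(1)])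
  then show ?thesis by (simp add: m aw_mono_def add.assoc)
qed

lemma part1: "m \<in> idx_le n \<Longrightarrow> \<exists>d \<in> aw_D q n. \<exists>e \<in> aw_ideal q. aw_mono q m = fa_add d e"
proof -
  assume "m \<in> idx_le n"
  then have "aw_mono q m \<in> aw_D q n" using mono_D D_mono by (metis deg_le_idx)
  moreover have "aw_mono q m = fa_add (aw_mono q m) (\<lambda>w. 0)" by (simp add: fa_add_def)
  ultimately show ?thesis using ideal_zero by blast
qed

abbreviation cg :: "'k::field \<Rightarrow> 'k fa \<Rightarrow> 'k fa \<Rightarrow> bool" where
  "cg q f g \<equiv> fa_diff f g \<in> aw_ideal q"

lemma cg_refl: "cg q f f"
proof -
  have "fa_diff f f = (\<lambda>w. 0)" by (simp add: fa_diff_def)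
  then show ?thesis using ideal_zero by simp
qed

lemma cg_sym: "cg q f g \<Longrightarrow> cg q g f"
proof -
  assume "cg q f g"
  then have "fa_smul (-1) (fa_diff f g) \<in> aw_ideal q" by (rule ideal_smul)
  moreover have "fa_smul (-1) (fa_diff f g) = fa_diff g f" by (auto simp: fa_smul_def fa_diff_def)
  ultimately show ?thesis by simp
qed

lemma cg_trans: "cg q f g \<Longrightarrow> cg q g h \<Longrightarrow> cg q f h"
proof -
  assume a: "cg q f g" "cg q g h"
  have "fa_diff f h = fa_add (fa_diff f g) (fa_diff g h)" by (auto simp: fa_add_def fa_diff_def)
  then show ?thesis using ideal_add[OF a] by simp
qed

lemma cg_eq: "f = g \<Longrightarrow> cg q f g" by (simp add: cg_refl)

lemma cg_comb3a: "cg q f1 g1 \<Longrightarrow> cg q f2 g2 \<Longrightarrow> cg q f3 g3 \<Longrightarrow>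
   cg q (\<lambda>w. a * f1 w - b * f2 w + c * f3 w) (\<lambda>w. a * g1 w - b * g2 w + c * g3 w)"
proof -
  assume h: "cg q f1 g1" "cg q f2 g2" "cg q f3 g3"
  have "fa_diff (\<lambda>w. a * f1 w - b * f2 w + c * f3 w) (\<lambda>w. a * g1 w - b * g2 w + c * g3 w)
     = fa_add (fa_diff (fa_smul a (fa_diff f1 g1)) (fa_smul b (fa_diff f2 g2))) (fa_smul c (fa_diff f3 g3))"
    by (auto simp: fa_add_def fa_diff_def fa_smul_def algebra_simps)
  then show ?thesis using h by (simp add: ideal_add ideal_diff ideal_smul)
qed

lemma cg_comb3b: "cg q f1 g1 \<Longrightarrow> cg q f2 g2 \<Longrightarrow> cg q f3 g3 \<Longrightarrow>
   cg q (\<lambda>w. a * f1 w + b * f2 w - c * f3 w) (\<lambda>w. a * g1 w + b * g2 w - c * g3 w)"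
proof -
  assume h: "cg q f1 g1" "cg q f2 g2" "cg q f3 g3"
  have "fa_diff (\<lambda>w. a * f1 w + b * f2 w - c * f3 w) (\<lambda>w. a * g1 w + b * g2 w - c * g3 w)
     = fa_diff (fa_add (fa_smul a (fa_diff f1 g1)) (fa_smul b (fa_diff f2 g2))) (fa_smul c (fa_diff f3 g3))"
    by (auto simp: fa_add_def fa_diff_def fa_smul_def algebra_simps)
  then show ?thesis using h by (simp add: ideal_add ideal_diff ideal_smul)
qed

lemma cg_left: "fin p \<Longrightarrow> cg q f g \<Longrightarrow> cg q (fa_mul p f) (fa_mul p g)"
  by (simp add: fa_mul_diff_right[symmetric] ideal_mul_left poly_fin)
lemma cg_right: "fin p \<Longrightarrow> cg q f g \<Longrightarrow> cg q (fa_mul f p) (fa_mul g p)"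
  by (simp add: fa_mul_diff_left[symmetric] ideal_mul_right poly_fin)

lemma cg_lin: assumes "fin v" "\<And>m. v m \<noteq> 0 \<Longrightarrow> cg q (F m) (G m)" shows "cg q (lin F v) (lin G v)"
proof -
  have "fa_diff (lin F v) (lin G v) = (\<lambda>w. \<Sum>m\<in>{m. v m \<noteq> 0}. v m * fa_diff (F m) (G m) w)"
    by (auto simp: lin_def fa_diff_def algebra_simps sum_subtractf)
  moreover have "(\<lambda>w. \<Sum>m\<in>{m. v m \<noteq> 0}. v m * fa_diff (F m) (G m) w) \<in> aw_ideal q"
    using assms by (intro subsp_sum[OF subsp_ideal]) (auto simp: fin_def)
  ultimately show ?thesis by simp
qed

abbreviation comm :: "'k::field \<Rightarrow> 'k fa \<Rightarrow> 'k fa \<Rightarrow> bool" where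
  "comm q z x \<equiv> cg q (fa_mul z x) (fa_mul x z)"

lemma comm_mul: "fin z \<Longrightarrow> fin x \<Longrightarrow> fin y \<Longrightarrow> comm q z x \<Longrightarrow> comm q z y \<Longrightarrow> comm q z (fa_mul x y)"
proof -
  assume f: "fin z" "fin x" "fin y" and c: "comm q z x" "comm q z y"
  have "cg q (fa_mul (fa_mul z x) y) (fa_mul (fa_mul x z) y)" using cg_right[OF f(3) c(1)] .
  moreover have "cg q (fa_mul x (fa_mul z y)) (fa_mul x (fa_mul y z))" using cg_left[OF f(2) c(2)] .
  ultimately show ?thesis by (simp add: fa_mul_assoc cg_trans)
qed

lemma comm_add: "comm q z x \<Longrightarrow> comm q z y \<Longrightarrow> comm q z (fa_add x y)"
proof -
  assume c: "comm q z x" "comm q z y"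
  have "fa_diff (fa_mul z (fa_add x y)) (fa_mul (fa_add x y) z) = fa_add (fa_diff (fa_mul z x) (fa_mul x z)) (fa_diff (fa_mul z y) (fa_mul y z))"
    unfolding fa_mul_add_left fa_mul_add_right by (simp add: fun_eq_iff fa_add_def fa_diff_def)
  then show ?thesis using ideal_add[OF c] by simp
qed
lemma comm_diff: "comm q z x \<Longrightarrow> comm q z y \<Longrightarrow> comm q z (fa_diff x y)"
proof -
  assume c: "comm q z x" "comm q z y"
  have "fa_diff (fa_mul z (fa_diff x y)) (fa_mul (fa_diff x y) z) = fa_diff (fa_diff (fa_mul z x) (fa_mul x z)) (fa_diff (fa_mul z y) (fa_mul y z))"
    unfolding fa_mul_diff_left fa_mul_diff_right by (simp add: fun_eq_iff fa_diff_def)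
  then show ?thesis using ideal_diff[OF c] by simp
qed
lemma comm_smul: "comm q z x \<Longrightarrow> comm q z (fa_smul c x)"
proof -
  assume c: "comm q z x"
  have "fa_diff (fa_mul z (fa_smul c x)) (fa_mul (fa_smul c x) z) = fa_smul c (fa_diff (fa_mul z x) (fa_mul x z))"
    unfolding fa_mul_smul_left fa_mul_smul_right by (simp add: fun_eq_iff fa_smul_def fa_diff_def algebra_simps)
  then show ?thesis using ideal_smul[OF c] by simp
qed

definition centrals :: "'k::field \<Rightarrow> 'k fa set" where
  "centrals q = {aw_alpha q, aw_beta q, aw_gamma q}"

lemma fin_centrals: "z \<in> centrals q \<Longrightarrow> fin z" by (auto simp: centrals_def)

lemma comm_gen: "z \<in> centrals q \<Longrightarrow> comm q z (fa_gen g)"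
proof -
  assume z: "z \<in> centrals q"
  have gm: "fa_gen g \<in> {AWA, AWB, AWC}" by (cases g) auto
  have z3: "z \<in> {aw_alpha q, aw_beta q, aw_gamma q}" using z by (simp add: centrals_def)
  have r: "fa_diff (fa_mul (fa_gen g) z) (fa_mul z (fa_gen g)) \<in> aw_rels q"
    unfolding aw_rels_def by (rule CollectI, rule exI[of _ "fa_gen g"], rule exI[of _ z], rule conjI[OF refl conjI[OF gm z3]])
  show ?thesis by (rule cg_sym[OF rel_in_ideal[OF r]])
qed

lemma comm_central: assumes z: "z \<in> centrals q" shows "comm q z (aw_central q (fa_gen x) (fa_gen y) (fa_gen u))"
proof -
  have fz: "fin z" using z by (rule fin_centrals)
  note g = comm_gen[OF z]
  show ?thesis
    unfolding aw_central_def
    apply (rule comm_smul, rule comm_add, rule g, rule comm_smul, rule comm_diff)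
     apply (rule comm_smul, rule comm_mul[OF fz fin_fa_gen fin_fa_gen g g])
    apply (rule comm_smul, rule comm_mul[OF fz fin_fa_gen fin_fa_gen g g])
    done
qed

lemma comm_centrals: assumes z: "z \<in> centrals q" and z': "z' \<in> centrals q" shows "comm q z z'"
proof -
  have "z' = aw_alpha q \<or> z' = aw_beta q \<or> z' = aw_gamma q" using z' by (simp add: centrals_def)
  then show ?thesis
  proof (elim disjE)
    assume "z' = aw_alpha q" then show ?thesis unfolding aw_alpha_def by (simp only:) (rule comm_central[OF z])
  next
    assume "z' = aw_beta q" then show ?thesis unfolding aw_beta_def by (simp only:) (rule comm_central[OF z])
  next
    assume "z' = aw_gamma q" then show ?thesis unfolding aw_gamma_def by (simp only:) (rule comm_central[OF z])
  qed
qed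

lemma comm_pow: "fin z \<Longrightarrow> fin x \<Longrightarrow> comm q z x \<Longrightarrow> comm q z (fa_pow x n)"
proof (induction n)
  case 0 then show ?case by (simp add: cg_refl)
next
  case (Suc n)
  have "comm q z (fa_mul x (fa_pow x n))"
    using comm_mul[OF Suc.prems(1,2) fin_fa_pow[OF Suc.prems(2)] Suc.prems(3) Suc.IH[OF Suc.prems]] .
  then show ?case by (simp only: fa_pow.simps)
qed

lemma alg1: "(q::'k::field) \<noteq> 0 \<Longrightarrow> d \<noteq> 0 \<Longrightarrow> s \<noteq> 0 \<Longrightarrow> G = s * (C + inverse d * (q * P - inverse q * Q)) \<Longrightarrow>
  Q = q^2 * P - q * d * inverse s * G + q * d * C"
  by (simp add: field_simps power2_eq_square)
lemma alg2: "(q::'k::field) \<noteq> 0 \<Longrightarrow> d \<noteq> 0 \<Longrightarrow> s \<noteq> 0 \<Longrightarrow> G = s * (C + inverse d * (q * P - inverse q * Q)) \<Longrightarrow>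
  P = inverse q ^ 2 * Q + inverse q * d * inverse s * G - inverse q * d * C"
  by (simp add: field_simps power2_eq_square)

lemma idBA: assumes q: "q \<noteq> 0" "q^4 \<noteq> 1"
  shows "fa_mul AWB AWA = (\<lambda>w. q^2 * fa_mul AWA AWB w - Kq q * g0 q * aw_gamma q w + Kq q * AWC w)"
proof
  fix w
  have "aw_gamma q w = (q + inverse q) * (AWC w + inverse (q^2 - inverse q ^ 2) * (q * fa_mul AWA AWB w - inverse q * fa_mul AWB AWA w))"
    by (simp add: aw_gamma_def aw_central_def fa_smul_def fa_add_def fa_diff_def)
  from alg1[OF q(1) q_facts[OF q] this] show "fa_mul AWB AWA w = q^2 * fa_mul AWA AWB w - Kq q * g0 q * aw_gamma q w + Kq q * AWC w"
    by (simp add: Kq_def dq_def g0_def)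
qed

lemma idCA: assumes q: "q \<noteq> 0" "q^4 \<noteq> 1"
  shows "fa_mul AWC AWA = (\<lambda>w. inverse q ^ 2 * fa_mul AWA AWC w + Kq' q * g0 q * aw_beta q w - Kq' q * AWB w)"
proof
  fix w
  have "aw_beta q w = (q + inverse q) * (AWB w + inverse (q^2 - inverse q ^ 2) * (q * fa_mul AWC AWA w - inverse q * fa_mul AWA AWC w))"
    by (simp add: aw_beta_def aw_central_def fa_smul_def fa_add_def fa_diff_def)
  from alg2[OF q(1) q_facts[OF q] this] show "fa_mul AWC AWA w = inverse q ^ 2 * fa_mul AWA AWC w + Kq' q * g0 q * aw_beta q w - Kq' q * AWB w"
    by (simp add: Kq'_def dq_def g0_def)
qed

lemma idCB: assumes q: "q \<noteq> 0" "q^4 \<noteq> 1"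
  shows "fa_mul AWC AWB = (\<lambda>w. q^2 * fa_mul AWB AWC w - Kq q * g0 q * aw_alpha q w + Kq q * AWA w)"
proof
  fix w
  have "aw_alpha q w = (q + inverse q) * (AWA w + inverse (q^2 - inverse q ^ 2) * (q * fa_mul AWB AWC w - inverse q * fa_mul AWC AWB w))"
    by (simp add: aw_alpha_def aw_central_def fa_smul_def fa_add_def fa_diff_def)
  from alg1[OF q(1) q_facts[OF q] this] show "fa_mul AWC AWB w = q^2 * fa_mul AWB AWC w - Kq q * g0 q * aw_alpha q w + Kq q * AWA w"
    by (simp add: Kq_def dq_def g0_def)
qed

lemma fa_mul_comb_a: "fa_mul (\<lambda>w. a * f w - b * g w + c * h w) k = (\<lambda>w. a * fa_mul f k w - b * fa_mul g k w + c * fa_mul h k w)"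
  by (simp add: fa_mul_def fun_eq_iff algebra_simps sum.distrib sum_subtractf sum_distrib_left)
lemma fa_mul_comb_b: "fa_mul (\<lambda>w. a * f w + b * g w - c * h w) k = (\<lambda>w. a * fa_mul f k w + b * fa_mul g k w - c * fa_mul h k w)"
  by (simp add: fa_mul_def fun_eq_iff algebra_simps sum.distrib sum_subtractf sum_distrib_left)

lemma mono_A: "fa_mul AWA (aw_mono q m) = aw_mono q (incA m)"
  by (cases m) (simp add: aw_mono_def fa_mul_assoc[symmetric])
lemma mono_B0: "fa_mul AWB (aw_mono q (0,j,k,r,s,t)) = aw_mono q (0,Suc j,k,r,s,t)"
  by (simp add: aw_mono_def fa_mul_assoc[symmetric])
lemma mono_C00: "fa_mul AWC (aw_mono q (0,0,k,r,s,t)) = aw_mono q (0,0,Suc k,r,s,t)"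
  by (simp add: aw_mono_def fa_mul_assoc[symmetric])

lemma cg_push: "fin z \<Longrightarrow> fin X \<Longrightarrow> fin Y \<Longrightarrow> comm q z X \<Longrightarrow> cg q (fa_mul z Y) Y' \<Longrightarrow> cg q (fa_mul z (fa_mul X Y)) (fa_mul X Y')"
proof -
  assume f: "fin z" "fin X" "fin Y" and c: "comm q z X" and h: "cg q (fa_mul z Y) Y'"
  have "cg q (fa_mul (fa_mul z X) Y) (fa_mul (fa_mul X z) Y)" by (rule cg_right[OF f(3) c])
  moreover have "cg q (fa_mul X (fa_mul z Y)) (fa_mul X Y')" by (rule cg_left[OF f(2) h])
  ultimately show ?thesis by (simp add: fa_mul_assoc cg_trans)
qed

lemma comm_gpow: "z \<in> centrals q \<Longrightarrow> comm q z (fa_pow (fa_gen g) n)"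
  by (rule comm_pow) (auto simp: fin_centrals comm_gen)
lemma comm_cpow: "z \<in> centrals q \<Longrightarrow> z' \<in> centrals q \<Longrightarrow> comm q z (fa_pow z' n)"
  by (rule comm_pow) (auto simp: fin_centrals comm_centrals)

lemma push_ABC: assumes z: "z \<in> centrals q" and Y: "fin Y" and h: "cg q (fa_mul z Y) Y'"
  shows "cg q (fa_mul z (fa_mul (fa_pow AWA i) (fa_mul (fa_pow AWB j) (fa_mul (fa_pow AWC k) Y))))
                (fa_mul (fa_pow AWA i) (fa_mul (fa_pow AWB j) (fa_mul (fa_pow AWC k) Y')))"
proof -
  have fz: "fin z" using z by (rule fin_centrals)
  have h1: "cg q (fa_mul z (fa_mul (fa_pow AWC k) Y)) (fa_mul (fa_pow AWC k) Y')"
    by (rule cg_push[OF fz _ Y comm_gpow[OF z] h]) simp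
  have h2: "cg q (fa_mul z (fa_mul (fa_pow AWB j) (fa_mul (fa_pow AWC k) Y))) (fa_mul (fa_pow AWB j) (fa_mul (fa_pow AWC k) Y'))"
    by (rule cg_push[OF fz _ _ comm_gpow[OF z] h1]) (simp_all add: Y)
  show ?thesis
    by (rule cg_push[OF fz _ _ comm_gpow[OF z] h2]) (simp_all add: Y)
qed

lemma cent: "aw_alpha q \<in> centrals q" "aw_beta q \<in> centrals q" "aw_gamma q \<in> centrals q"
  by (auto simp: centrals_def)

lemma central_alpha: "cg q (fa_mul (aw_alpha q) (aw_mono q m)) (aw_mono q (incR m))"
proof -
  obtain i j k r s t where m: "m = (i,j,k,r,s,t)" by (cases m)
  let ?R = "fa_mul (fa_pow (aw_beta q) s) (fa_pow (aw_gamma q) t)"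
  have "cg q (fa_mul (aw_alpha q) (fa_mul (fa_pow (aw_alpha q) r) ?R)) (fa_mul (fa_pow (aw_alpha q) (Suc r)) ?R)"
    by (rule cg_eq) (simp add: fa_mul_assoc)
  from push_ABC[OF cent(1) _ this] show ?thesis by (simp add: m aw_mono_def)
qed

lemma central_beta: "cg q (fa_mul (aw_beta q) (aw_mono q m)) (aw_mono q (incS m))"
proof -
  obtain i j k r s t where m: "m = (i,j,k,r,s,t)" by (cases m)
  have "cg q (fa_mul (aw_beta q) (fa_mul (fa_pow (aw_beta q) s) (fa_pow (aw_gamma q) t))) (fa_mul (fa_pow (aw_beta q) (Suc s)) (fa_pow (aw_gamma q) t))"
    by (rule cg_eq) (simp add: fa_mul_assoc)
  note h1 = this
  have "cg q (fa_mul (aw_beta q) (fa_mul (fa_pow (aw_alpha q) r) (fa_mul (fa_pow (aw_beta q) s) (fa_pow (aw_gamma q) t))))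
     (fa_mul (fa_pow (aw_alpha q) r) (fa_mul (fa_pow (aw_beta q) (Suc s)) (fa_pow (aw_gamma q) t)))"
    by (rule cg_push[OF fin_beta _ _ comm_cpow[OF cent(2) cent(1)] h1]) simp_all
  from push_ABC[OF cent(2) _ this] show ?thesis by (simp add: m aw_mono_def)
qed

lemma central_gamma: "cg q (fa_mul (aw_gamma q) (aw_mono q m)) (aw_mono q (incT m))"
proof -
  obtain i j k r s t where m: "m = (i,j,k,r,s,t)" by (cases m)
  have "cg q (fa_mul (aw_gamma q) (fa_pow (aw_gamma q) t)) (fa_pow (aw_gamma q) (Suc t))"
    by (rule cg_eq) simp
  note h1 = this
  have h2: "cg q (fa_mul (aw_gamma q) (fa_mul (fa_pow (aw_beta q) s) (fa_pow (aw_gamma q) t))) (fa_mul (fa_pow (aw_beta q) s) (fa_pow (aw_gamma q) (Suc t)))"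
    by (rule cg_push[OF fin_gamma _ _ comm_cpow[OF cent(3) cent(2)] h1]) simp_all
  have "cg q (fa_mul (aw_gamma q) (fa_mul (fa_pow (aw_alpha q) r) (fa_mul (fa_pow (aw_beta q) s) (fa_pow (aw_gamma q) t))))
     (fa_mul (fa_pow (aw_alpha q) r) (fa_mul (fa_pow (aw_beta q) s) (fa_pow (aw_gamma q) (Suc t))))"
    by (rule cg_push[OF fin_gamma _ _ comm_cpow[OF cent(3) cent(1)] h2]) simp_all
  from push_ABC[OF cent(3) _ this] show ?thesis by (simp add: m aw_mono_def)
qed

lemma A_lin: "fin u \<Longrightarrow> fa_mul AWA (lin (aw_mono q) u) = lin (aw_mono q) (LA u)"
proof -
  assume u: "fin u"
  have "fa_mul AWA (lin (aw_mono q) u) = lin (\<lambda>m. aw_mono q (incA m)) u"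
    by (simp add: fa_mul_lin_right mono_A)
  also have "\<dots> = lin (aw_mono q) (LA u)" unfolding LA_def using u by (simp add: lin_lin)
  finally show ?thesis .
qed

lemma lin_mono_LT: "lin (aw_mono q) (LT (ev m)) = aw_mono q (incT m)" by simp

lemma stepB: assumes q: "q \<noteq> 0" "q^4 \<noteq> 1"
  and IHB: "cg q (fa_mul AWB (aw_mono q m)) (lin (aw_mono q) (vB q m))"
  and IHC: "cg q (fa_mul AWC (aw_mono q m)) (lin (aw_mono q) (vC q m))"
  shows "cg q (fa_mul AWB (aw_mono q (incA m))) (lin (aw_mono q) (vB q (incA m)))"
proof -
  have e1: "fa_mul AWB (aw_mono q (incA m)) = (\<lambda>w. q^2 * fa_mul AWA (fa_mul AWB (aw_mono q m)) w
      - Kq q * g0 q * fa_mul (aw_gamma q) (aw_mono q m) w + Kq q * fa_mul AWC (aw_mono q m) w)"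
  proof -
    have "fa_mul AWB (aw_mono q (incA m)) = fa_mul (fa_mul AWB AWA) (aw_mono q m)"
      by (simp only: mono_A[symmetric] fa_mul_assoc)
    also have "\<dots> = (\<lambda>w. q^2 * fa_mul (fa_mul AWA AWB) (aw_mono q m) w
      - Kq q * g0 q * fa_mul (aw_gamma q) (aw_mono q m) w + Kq q * fa_mul AWC (aw_mono q m) w)"
      by (simp only: idBA[OF q] fa_mul_comb_a)
    finally show ?thesis by (simp only: fa_mul_assoc)
  qed
  have c: "cg q (\<lambda>w. q^2 * fa_mul AWA (fa_mul AWB (aw_mono q m)) w
      - Kq q * g0 q * fa_mul (aw_gamma q) (aw_mono q m) w + Kq q * fa_mul AWC (aw_mono q m) w)
      (\<lambda>w. q^2 * fa_mul AWA (lin (aw_mono q) (vB q m)) w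
      - Kq q * g0 q * aw_mono q (incT m) w + Kq q * lin (aw_mono q) (vC q m) w)"
    by (rule cg_comb3a[OF cg_left[OF fin_fa_gen IHB] central_gamma IHC])
  have e2: "lin (aw_mono q) (vB q (incA m)) = (\<lambda>w. q^2 * fa_mul AWA (lin (aw_mono q) (vB q m)) w
      - Kq q * g0 q * aw_mono q (incT m) w + Kq q * lin (aw_mono q) (vC q m) w)"
    unfolding relG[of q m]
    by (subst lin3a) (simp_all add: A_lin lin_mono_LT del: LT_ev)
  show ?thesis using cg_trans[OF cg_eq[OF e1] c] unfolding e2 .
qed


lemma stepC: assumes q: "q \<noteq> 0" "q^4 \<noteq> 1"
  and IHB: "cg q (fa_mul AWB (aw_mono q m)) (lin (aw_mono q) (vB q m))"
  and IHC: "cg q (fa_mul AWC (aw_mono q m)) (lin (aw_mono q) (vC q m))"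
  shows "cg q (fa_mul AWC (aw_mono q (incA m))) (lin (aw_mono q) (vC q (incA m)))"
proof -
  have e1: "fa_mul AWC (aw_mono q (incA m)) = (\<lambda>w. inverse q ^ 2 * fa_mul AWA (fa_mul AWC (aw_mono q m)) w
      + Kq' q * g0 q * fa_mul (aw_beta q) (aw_mono q m) w - Kq' q * fa_mul AWB (aw_mono q m) w)"
  proof -
    have "fa_mul AWC (aw_mono q (incA m)) = fa_mul (fa_mul AWC AWA) (aw_mono q m)"
      by (simp only: mono_A[symmetric] fa_mul_assoc)
    also have "\<dots> = (\<lambda>w. inverse q ^ 2 * fa_mul (fa_mul AWA AWC) (aw_mono q m) w
      + Kq' q * g0 q * fa_mul (aw_beta q) (aw_mono q m) w - Kq' q * fa_mul AWB (aw_mono q m) w)"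
      by (simp only: idCA[OF q] fa_mul_comb_b)
    finally show ?thesis by (simp only: fa_mul_assoc)
  qed
  have c: "cg q (\<lambda>w. inverse q ^ 2 * fa_mul AWA (fa_mul AWC (aw_mono q m)) w
      + Kq' q * g0 q * fa_mul (aw_beta q) (aw_mono q m) w - Kq' q * fa_mul AWB (aw_mono q m) w)
      (\<lambda>w. inverse q ^ 2 * fa_mul AWA (lin (aw_mono q) (vC q m)) w
      + Kq' q * g0 q * aw_mono q (incS m) w - Kq' q * lin (aw_mono q) (vB q m) w)"
    by (rule cg_comb3b[OF cg_left[OF fin_fa_gen IHC] central_beta IHB])
  have lS: "lin (aw_mono q) (LS (ev m)) = aw_mono q (incS m)" by simp
  have e2: "lin (aw_mono q) (vC q (incA m)) = (\<lambda>w. inverse q ^ 2 * fa_mul AWA (lin (aw_mono q) (vC q m)) w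
      + Kq' q * g0 q * aw_mono q (incS m) w - Kq' q * lin (aw_mono q) (vB q m) w)"
    unfolding relB[of q m]
    by (subst lin3b) (simp_all add: A_lin lS del: LS_ev)
  show ?thesis using cg_trans[OF cg_eq[OF e1] c] unfolding e2 .
qed

lemma step5: assumes q: "q \<noteq> 0" "q^4 \<noteq> 1"
  and IHC: "cg q (fa_mul AWC (aw_mono q (0,j,k,r,s,t))) (lin (aw_mono q) (vC q (0,j,k,r,s,t)))"
  and IHB: "\<And>m'. vC q (0,j,k,r,s,t) m' \<noteq> 0 \<Longrightarrow> cg q (fa_mul AWB (aw_mono q m')) (lin (aw_mono q) (vB q m'))"
  shows "cg q (fa_mul AWC (aw_mono q (0,Suc j,k,r,s,t))) (lin (aw_mono q) (vC q (0,Suc j,k,r,s,t)))"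
proof -
  let ?m = "(0,j,k,r,s,t)"
  let ?u = "vC q ?m"
  have e1: "fa_mul AWC (aw_mono q (0,Suc j,k,r,s,t)) = (\<lambda>w. q^2 * fa_mul AWB (fa_mul AWC (aw_mono q ?m)) w
      - Kq q * g0 q * fa_mul (aw_alpha q) (aw_mono q ?m) w + Kq q * fa_mul AWA (aw_mono q ?m) w)"
  proof -
    have "fa_mul AWC (aw_mono q (0,Suc j,k,r,s,t)) = fa_mul (fa_mul AWC AWB) (aw_mono q ?m)"
      by (simp only: mono_B0[symmetric] fa_mul_assoc)
    also have "\<dots> = (\<lambda>w. q^2 * fa_mul (fa_mul AWB AWC) (aw_mono q ?m) w
      - Kq q * g0 q * fa_mul (aw_alpha q) (aw_mono q ?m) w + Kq q * fa_mul AWA (aw_mono q ?m) w)"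
      by (simp only: idCB[OF q] fa_mul_comb_a)
    finally show ?thesis by (simp only: fa_mul_assoc)
  qed
  have c1: "cg q (fa_mul AWB (fa_mul AWC (aw_mono q ?m))) (lin (aw_mono q) (lin (vB q) ?u))"
  proof -
    have h1: "cg q (fa_mul AWB (fa_mul AWC (aw_mono q ?m))) (fa_mul AWB (lin (aw_mono q) ?u))"
      by (rule cg_left[OF fin_fa_gen IHC])
    have h2: "fa_mul AWB (lin (aw_mono q) ?u) = lin (\<lambda>m. fa_mul AWB (aw_mono q m)) ?u"
      by (rule fa_mul_lin_right)
    have h3: "cg q (lin (\<lambda>m. fa_mul AWB (aw_mono q m)) ?u) (lin (\<lambda>m. lin (aw_mono q) (vB q m)) ?u)"
      by (rule cg_lin[OF fin_vBC IHB])
    have h4: "lin (\<lambda>m. lin (aw_mono q) (vB q m)) ?u = lin (aw_mono q) (lin (vB q) ?u)"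
      by (rule lin_lin[symmetric]) simp_all
    show ?thesis using cg_trans[OF h1 cg_trans[OF cg_eq[OF h2] h3]] unfolding h4 .
  qed
  have c: "cg q (\<lambda>w. q^2 * fa_mul AWB (fa_mul AWC (aw_mono q ?m)) w
      - Kq q * g0 q * fa_mul (aw_alpha q) (aw_mono q ?m) w + Kq q * fa_mul AWA (aw_mono q ?m) w)
      (\<lambda>w. q^2 * lin (aw_mono q) (lin (vB q) ?u) w
      - Kq q * g0 q * aw_mono q (incR ?m) w + Kq q * aw_mono q (incA ?m) w)"
    by (rule cg_comb3a[OF c1 central_alpha cg_eq[OF mono_A]])
  have e2: "lin (aw_mono q) (vC q (0,Suc j,k,r,s,t)) = (\<lambda>w. q^2 * lin (aw_mono q) (lin (vB q) ?u) w
      - Kq q * g0 q * aw_mono q (incR ?m) w + Kq q * aw_mono q (incA ?m) w)"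
    unfolding vC_0Suc
    by (subst lin3a) simp_all
  show ?thesis using cg_trans[OF cg_eq[OF e1] c] unfolding e2 .
qed


lemma straight: "q \<noteq> 0 \<Longrightarrow> q^4 \<noteq> 1 \<Longrightarrow>
   cg q (fa_mul (fa_gen (if b then GC else GB)) (aw_mono q m)) (lin (aw_mono q) (vBC q b m))"
proof (induction q b m rule: vBC.induct)
  case (1 q j k r s t)
  show ?case unfolding if_False vBC.simps(1) lin_ev mono_B0 by (rule cg_refl)
next
  case (2 q i j k r s t)
  have q: "q \<noteq> 0" "q^4 \<noteq> 1" by fact+
  have IHB: "cg q (fa_mul AWB (aw_mono q (i,j,k,r,s,t))) (lin (aw_mono q) (vB q (i,j,k,r,s,t)))"
    using 2(1)[OF q] unfolding if_False .
  have IHC: "cg q (fa_mul AWC (aw_mono q (i,j,k,r,s,t))) (lin (aw_mono q) (vC q (i,j,k,r,s,t)))"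
    using 2(2)[OF q] unfolding if_True .
  show ?case using stepB[OF q IHB IHC] unfolding if_False incA.simps .
next
  case (3 q i j k r s t)
  have q: "q \<noteq> 0" "q^4 \<noteq> 1" by fact+
  have IHB: "cg q (fa_mul AWB (aw_mono q (i,j,k,r,s,t))) (lin (aw_mono q) (vB q (i,j,k,r,s,t)))"
    using 3(2)[OF q] unfolding if_False .
  have IHC: "cg q (fa_mul AWC (aw_mono q (i,j,k,r,s,t))) (lin (aw_mono q) (vC q (i,j,k,r,s,t)))"
    using 3(1)[OF q] unfolding if_True .
  show ?case using stepC[OF q IHB IHC] unfolding if_True incA.simps .
next
  case (4 q k r s t)
  show ?case unfolding if_True vBC.simps(4) lin_ev mono_C00 by (rule cg_refl)
next
  case (5 q j k r s t)
  have q: "q \<noteq> 0" "q^4 \<noteq> 1" by fact+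
  have z: "(0,0,0,0,0,0) \<in> idx_le (Suc (j+k+r+s+t))" by (simp add: idx_le_def)
  have IHC: "cg q (fa_mul AWC (aw_mono q (0,j,k,r,s,t))) (lin (aw_mono q) (vC q (0,j,k,r,s,t)))"
    using 5(1)[OF z q] unfolding if_True .
  have IHB: "cg q (fa_mul AWB (aw_mono q m')) (lin (aw_mono q) (vB q m'))" if "vC q (0,j,k,r,s,t) m' \<noteq> 0" for m'
  proof -
    have "m' \<in> idx_le (Suc (j+k+r+s+t))" using that vBC_supp_sub[of q True "(0,j,k,r,s,t)"] by auto
    from 5(2)[OF this q] show ?thesis unfolding if_False .
  qed
  show ?case using step5[OF q IHC IHB] unfolding if_True .
qed

definition Rn :: "'k::field \<Rightarrow> nat \<Rightarrow> 'k fa set" where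
  "Rn q n = {d. \<exists>c. cg q d (\<lambda>w. \<Sum>m\<in>idx_le n. c m * aw_mono q m w)}"

lemma subsp_R: "subsp (Rn q n)"
  unfolding subsp_def
proof (intro conjI ballI allI)
  show "(\<lambda>w. 0) \<in> Rn q n" unfolding Rn_def
    by (intro CollectI exI[of _ "\<lambda>_. 0"]) (simp add: cg_refl)
next
  fix f g assume "f \<in> Rn q n" "g \<in> Rn q n"
  then obtain c1 c2 where c: "cg q f (\<lambda>w. \<Sum>m\<in>idx_le n. c1 m * aw_mono q m w)" "cg q g (\<lambda>w. \<Sum>m\<in>idx_le n. c2 m * aw_mono q m w)"
    unfolding Rn_def by blast
  have "fa_diff (fa_add f g) (\<lambda>w. \<Sum>m\<in>idx_le n. (c1 m + c2 m) * aw_mono q m w)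
     = fa_add (fa_diff f (\<lambda>w. \<Sum>m\<in>idx_le n. c1 m * aw_mono q m w)) (fa_diff g (\<lambda>w. \<Sum>m\<in>idx_le n. c2 m * aw_mono q m w))"
    by (simp add: fun_eq_iff fa_diff_def fa_add_def algebra_simps sum.distrib)
  define c' where "c' m = c1 m + c2 m" for m
  have "cg q (fa_add f g) (\<lambda>w. \<Sum>m\<in>idx_le n. c' m * aw_mono q m w)"
    unfolding c'_def using ideal_add[OF c] \<open>fa_diff (fa_add f g) _ = _\<close> by simp
  then show "fa_add f g \<in> Rn q n" unfolding Rn_def by blast
next
  fix a f assume "f \<in> Rn q n"
  then obtain c1 where c: "cg q f (\<lambda>w. \<Sum>m\<in>idx_le n. c1 m * aw_mono q m w)"
    unfolding Rn_def by blast
  have "fa_diff (fa_smul a f) (\<lambda>w. \<Sum>m\<in>idx_le n. (a * c1 m) * aw_mono q m w)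
     = fa_smul a (fa_diff f (\<lambda>w. \<Sum>m\<in>idx_le n. c1 m * aw_mono q m w))"
    by (simp add: fun_eq_iff fa_diff_def fa_smul_def algebra_simps sum_distrib_left)
  define c' where "c' m = a * c1 m" for m
  have "cg q (fa_smul a f) (\<lambda>w. \<Sum>m\<in>idx_le n. c' m * aw_mono q m w)"
    unfolding c'_def using ideal_smul[OF c] \<open>fa_diff (fa_smul a f) _ = _\<close> by simp
  then show "fa_smul a f \<in> Rn q n" unfolding Rn_def by blast
qed

lemma R_cg: "cg q d d' \<Longrightarrow> d' \<in> Rn q n \<Longrightarrow> d \<in> Rn q n"
  unfolding Rn_def by (auto intro: cg_trans)

lemma lin_R: assumes "fin v" "{m. v m \<noteq> 0} \<subseteq> idx_le n" shows "lin (aw_mono q) v \<in> Rn q n"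
proof -
  have "lin (aw_mono q) v = (\<lambda>w. \<Sum>m\<in>idx_le n. v m * aw_mono q m w)"
    by (intro ext) (rule lin_super[OF finite_idx_le assms(2)])
  then show ?thesis unfolding Rn_def by (auto intro!: exI[of _ v] cg_eq)
qed

lemma mono_R: "deg m \<le> n \<Longrightarrow> aw_mono q m \<in> Rn q n"
proof -
  assume "deg m \<le> n"
  then have "{w. ev m w \<noteq> 0} \<subseteq> idx_le n" by (auto simp: ev_def deg_le_idx)
  then have "lin (aw_mono q) (ev m) \<in> Rn q n" by (rule lin_R[OF fin_ev])
  then show ?thesis by simp
qed

lemma vBC_R: "deg m \<le> n \<Longrightarrow> lin (aw_mono q) (vBC q b m) \<in> Rn q (Suc n)"
proof (rule lin_R)
  assume "deg m \<le> n"
  then show "{w. vBC q b m w \<noteq> 0} \<subseteq> idx_le (Suc n)"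
    using vBC_supp_sub[of q b m] by (auto simp: deg_le_idx)
qed simp

lemma deg_incs[simp]: "deg (incR m) = Suc (deg m)" "deg (incS m) = Suc (deg m)" "deg (incT m) = Suc (deg m)"
  by (cases m; simp)+

definition gens1 :: "'k::field \<Rightarrow> 'k fa set" where
  "gens1 q = {fa_one, AWA, AWB, AWC, aw_alpha q, aw_beta q, aw_gamma q}"

lemma gen_mono: assumes q: "q \<noteq> 0" "q^4 \<noteq> 1" and X: "X \<in> gens1 q" and m: "deg m \<le> n"
  shows "fa_mul X (aw_mono q m) \<in> Rn q (Suc n)"
proof -
  have "X = fa_one \<or> X = AWA \<or> X = AWB \<or> X = AWC \<or> X = aw_alpha q \<or> X = aw_beta q \<or> X = aw_gamma q"
    using X by (simp add: gens1_def)
  then show ?thesis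
  proof (elim disjE)
    assume "X = fa_one" then show ?thesis using m by (simp add: mono_R)
  next
    assume "X = AWA" then show ?thesis using m by (simp add: mono_A mono_R)
  next
    assume "X = AWB" then show ?thesis
      using R_cg[OF straight[OF q, of False m] vBC_R[OF m]] by simp
  next
    assume "X = AWC" then show ?thesis
      using R_cg[OF straight[OF q, of True m] vBC_R[OF m]] by simp
  next
    assume hX: "X = aw_alpha q" then show ?thesis
    proof -
      have "aw_mono q (incR m) \<in> Rn q (Suc n)" by (rule mono_R) (simp add: m)
      then show ?thesis using R_cg[OF central_alpha] hX by simp
    qed
  next
    assume hX: "X = aw_beta q" then show ?thesis
    proof -
      have "aw_mono q (incS m) \<in> Rn q (Suc n)" by (rule mono_R) (simp add: m)
      then show ?thesis using R_cg[OF central_beta] hX by simp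
    qed
  next
    assume hX: "X = aw_gamma q" then show ?thesis
    proof -
      have "aw_mono q (incT m) \<in> Rn q (Suc n)" by (rule mono_R) (simp add: m)
      then show ?thesis using R_cg[OF central_gamma] hX by simp
    qed
  qed
qed

lemma fin_gens1: "X \<in> gens1 q \<Longrightarrow> fin X" by (auto simp: gens1_def)

lemma X_R: assumes q: "q \<noteq> 0" "q^4 \<noteq> 1" and X: "X \<in> gens1 q" and d: "d \<in> Rn q n"
  shows "fa_mul X d \<in> Rn q (Suc n)"
proof -
  obtain c where c: "cg q d (\<lambda>w. \<Sum>m\<in>idx_le n. c m * aw_mono q m w)" using d unfolding Rn_def by blast
  have h1: "cg q (fa_mul X d) (fa_mul X (\<lambda>w. \<Sum>m\<in>idx_le n. c m * aw_mono q m w))"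
    by (rule cg_left[OF fin_gens1[OF X] c])
  have "(\<lambda>w. \<Sum>m\<in>idx_le n. c m * fa_mul X (aw_mono q m) w) \<in> Rn q (Suc n)"
    by (rule subsp_sum[OF subsp_R finite_idx_le]) (auto intro!: gen_mono[OF q X] simp: deg_le_idx)
  then show ?thesis using R_cg[OF h1] by (simp add: fa_mul_sum_right)
qed

lemma D1_R: assumes q: "q \<noteq> 0" "q^4 \<noteq> 1" and h: "h \<in> aw_D1 q" and k: "k \<in> Rn q n"
  shows "fa_mul h k \<in> Rn q (Suc n)"
proof -
  have "subsp {h. fa_mul h k \<in> Rn q (Suc n)}"
    using subsp_R[of q "Suc n"] unfolding subsp_def
    by (auto simp: fa_mul_zero_left fa_mul_add_left fa_mul_smul_left)
  moreover have "gens1 q \<subseteq> {h. fa_mul h k \<in> Rn q (Suc n)}"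
    using X_R[OF q _ k] by blast
  ultimately have "fa_span (gens1 q) \<subseteq> {h. fa_mul h k \<in> Rn q (Suc n)}" by (rule span_sub)
  then show ?thesis using h unfolding aw_D1_def gens1_def by blast
qed

lemma D_R: assumes q: "q \<noteq> 0" "q^4 \<noteq> 1" shows "aw_D q n \<subseteq> Rn q n"
proof (induction n)
  case 0
  have "fa_one = aw_mono q (0,0,0,0,0,0)" by (simp add: aw_mono_def)
  then have "fa_one \<in> Rn q 0" using mono_R[of "(0,0,0,0,0,0)" 0 q] by simp
  then show ?case by (simp add: span_sub[OF subsp_R])
next
  case (Suc n)
  have "{fa_mul h k |h k. h \<in> aw_D1 q \<and> k \<in> aw_D q n} \<subseteq> Rn q (Suc n)"
    using D1_R[OF q] Suc by blast
  then show ?case by (simp add: span_sub[OF subsp_R])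
qed

theorem theorem5p4:
  fixes q :: "'k::field" and n :: nat
  assumes "q \<noteq> 0" and "q ^ 4 \<noteq> 1"
  shows "(\<forall>m \<in> idx_le n. \<exists>d \<in> aw_D q n. \<exists>e \<in> aw_ideal q. aw_mono q m = fa_add d e)
       \<and> (\<forall>d \<in> aw_D q n. \<exists>c. fa_diff d (\<lambda>w. \<Sum>m\<in>idx_le n. c m * aw_mono q m w) \<in> aw_ideal q)
       \<and> (\<forall>c. (\<lambda>w. \<Sum>m\<in>idx_le n. c m * aw_mono q m w) \<in> aw_ideal q \<longrightarrow> (\<forall>m\<in>idx_le n. c m = 0))"
proof (intro conjI ballI allI impI)
  fix m assume "m \<in> idx_le n"
  then show "\<exists>d \<in> aw_D q n. \<exists>e \<in> aw_ideal q. aw_mono q m = fa_add d e" by (rule part1)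
next
  fix d assume "d \<in> aw_D q n"
  then have "d \<in> Rn q n" using D_R[OF assms] by blast
  then show "\<exists>c. fa_diff d (\<lambda>w. \<Sum>m\<in>idx_le n. c m * aw_mono q m w) \<in> aw_ideal q"
    unfolding Rn_def by blast
next
  fix c m assume "(\<lambda>w. \<Sum>m\<in>idx_le n. c m * aw_mono q m w) \<in> aw_ideal q" "m \<in> idx_le n"
  then show "c m = 0" by (rule independence[OF assms])
qed

end
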